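(* Let $\mathfrak A$ be a unital $C^*$-algebra, $A$ a unital $\mathfrak A$-$C^*$-module and $n\ge1$. Then the assignment $\varphi\mapsto\hat\varphi$, $\hat\varphi([a_{ij}])=\sum_{i,j=1}^n\varphi(a_{ij})_{ij}$, is a bijection from $CP_{\mathfrak A}(A,\mathbb M_n(\mathfrak A))$ onto $CP_{\mathfrak A}(\mathbb M_n(A),\mathfrak A)$; that is, a module map $\varphi:A\to\mathbb M_n(\mathfrak A)$ is completely positive if and only if $\hat\varphi$ is completely positive.
   Context: An $\mathfrak A$-$C^*$-module is a $C^*$-algebra which is a left Banach $\mathfrak A$-module with contractive action satisfying $(\alpha\cdot a)^*=\alpha^*\cdot a^*$, $\alpha\cdot(ab)=(\alpha\cdot a)b$, $(\alpha\beta)\cdot a=\alpha\cdot(\beta\cdot a)$; it is unital if it is a unital $C^*$-algebra and the closed span of $\{\alpha\cdot a\}$ is $A$. $CP_{\mathfrak A}(X,Y)$ denotes the completely positive left $\mathfrak A$-module linear maps $X\to Y$. The actions are $\alpha\cdot[a_{ij}]=[\alpha\cdot a_{ij}]$ on $\mathbb M_n(A)$, $\alpha\cdot[\alpha_{ij}]=[\alpha\alpha_{ij}]$ on $\mathbb M_n(\mathfrak A)$, and left multiplication on $\mathfrak A$; $\varphi(a)_{ij}$ is the $(i,j)$ entry of $\varphi(a)$. *)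

theory Defs
  imports "HOL-Analysis.Analysis"
begin

section \<open>C*-algebras\<close>

text \<open>HOL has no complex vector spaces, so the complex scalar multiplication
  is an extra operation, compatible with the real one.\<close>

class cstar_algebra = real_normed_algebra + banach +
  fixes scC :: "complex \<Rightarrow> 'a \<Rightarrow> 'a"
    and adj :: "'a \<Rightarrow> 'a"
  assumes scC_add_right: "scC c (x + y) = scC c x + scC c y"
    and scC_add_left: "scC (c + d) x = scC c x + scC d x"
    and scC_scC: "scC c (scC d x) = scC (c * d) x"
    and scC_of_real: "scC (complex_of_real r) x = r *\<^sub>R x"
    and norm_scC: "norm (scC c x) = cmod c * norm x"
    and scC_mult_left: "scC c (x * y) = scC c x * y"
    and scC_mult_right: "scC c (x * y) = x * scC c y"
    and adj_adj: "adj (adj x) = x"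
    and adj_add: "adj (x + y) = adj x + adj y"
    and adj_scC: "adj (scC c x) = scC (cnj c) (adj x)"
    and adj_mult: "adj (x * y) = adj y * adj x"
    and cstar_identity: "norm (adj x * x) = norm x * norm x"

text \<open>Unital C*-algebra.\<close>
class unital_cstar_algebra = cstar_algebra + ring_1

section \<open>Positivity and complete positivity\<close>

text \<open>A k x k matrix (indices below k) over a *-algebra with multiplication
  mul and involution ad is positive iff it is of the form B* B.\<close>
definition mat_pos ::
  "('x \<Rightarrow> 'x \<Rightarrow> 'x) \<Rightarrow> ('x \<Rightarrow> 'x) \<Rightarrow> nat \<Rightarrow> (nat \<Rightarrow> nat \<Rightarrow> 'x::comm_monoid_add) \<Rightarrow> bool" where
  "mat_pos mul ad k M \<longleftrightarrow>
     (\<exists>B::nat \<Rightarrow> nat \<Rightarrow> 'x. \<forall>i<k. \<forall>j<k. M i j = (\<Sum>l<k. mul (ad (B l i)) (B l j)))"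

text \<open>Complete positivity: every amplification phi_k : M_k(X) -> M_k(Y) is positive.\<close>
definition completely_positive ::
  "('x \<Rightarrow> 'x \<Rightarrow> 'x) \<Rightarrow> ('x \<Rightarrow> 'x) \<Rightarrow> ('y \<Rightarrow> 'y \<Rightarrow> 'y) \<Rightarrow> ('y \<Rightarrow> 'y)
    \<Rightarrow> ('x::comm_monoid_add \<Rightarrow> 'y::comm_monoid_add) \<Rightarrow> bool" where
  "completely_positive mulX adX mulY adY f \<longleftrightarrow>
     (\<forall>k M. mat_pos mulX adX k M \<longrightarrow> mat_pos mulY adY k (\<lambda>i j. f (M i j)))"

section \<open>Matrices over a C*-algebra\<close>

definition madj :: "'a::cstar_algebra ^'n^'n \<Rightarrow> 'a^'n^'n" where
  "madj M = (\<chi> i j. adj (M $ j $ i))"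

definition mscC :: "complex \<Rightarrow> 'a::cstar_algebra ^'n^'m \<Rightarrow> 'a^'n^'m" where
  "mscC c M = (\<chi> i j. scC c (M $ i $ j))"

section \<open>Modules\<close>

text \<open>A (unital) 'u-C*-module structure on the unital C*-algebra 'a, given by
  the action act.\<close>
definition unital_AC_module ::
  "('u::unital_cstar_algebra \<Rightarrow> 'a::unital_cstar_algebra \<Rightarrow> 'a) \<Rightarrow> bool" where
  "unital_AC_module act \<longleftrightarrow>
     (\<forall>\<alpha> \<beta> a. act (\<alpha> + \<beta>) a = act \<alpha> a + act \<beta> a) \<and>
     (\<forall>\<alpha> a b. act \<alpha> (a + b) = act \<alpha> a + act \<alpha> b) \<and>
     (\<forall>c \<alpha> a. act (scC c \<alpha>) a = scC c (act \<alpha> a)) \<and>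
     (\<forall>c \<alpha> a. act \<alpha> (scC c a) = scC c (act \<alpha> a)) \<and>
     (\<forall>\<alpha> a. norm (act \<alpha> a) \<le> norm \<alpha> * norm a) \<and>
     (\<forall>\<alpha> a. adj (act \<alpha> a) = act (adj \<alpha>) (adj a)) \<and>
     (\<forall>\<alpha> a b. act \<alpha> (a * b) = act \<alpha> a * b) \<and>
     (\<forall>\<alpha> \<beta> a. act (\<alpha> * \<beta>) a = act \<alpha> (act \<beta> a)) \<and>
     closure (span {act \<alpha> a | \<alpha> a. True}) = UNIV"

text \<open>Left module linear maps, for given complex scalings and actions.\<close>
definition module_map ::
  "(complex \<Rightarrow> 'x \<Rightarrow> 'x) \<Rightarrow> ('u \<Rightarrow> 'x \<Rightarrow> 'x) \<Rightarrow> (complex \<Rightarrow> 'y \<Rightarrow> 'y) \<Rightarrow> ('u \<Rightarrow> 'y \<Rightarrow> 'y)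
    \<Rightarrow> ('x::plus \<Rightarrow> 'y::plus) \<Rightarrow> bool" where
  "module_map scX actX scY actY f \<longleftrightarrow>
     (\<forall>x y. f (x + y) = f x + f y) \<and>
     (\<forall>c x. f (scX c x) = scY c (f x)) \<and>
     (\<forall>\<alpha> x. f (actX \<alpha> x) = actY \<alpha> (f x))"

text \<open>The actions of 'u on M_n(A) (entrywise) and on M_n('u) (left multiplication
  of the entries), and on 'u itself (left multiplication).\<close>
definition mact :: "('u \<Rightarrow> 'a \<Rightarrow> 'a) \<Rightarrow> 'u \<Rightarrow> 'a^'n^'n \<Rightarrow> 'a^'n^'n" where
  "mact act \<alpha> M = (\<chi> i j. act \<alpha> (M $ i $ j))"

definition mlmult :: "'u::times \<Rightarrow> 'u^'n^'n \<Rightarrow> 'u^'n^'n" where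
  "mlmult \<alpha> M = (\<chi> i j. \<alpha> * M $ i $ j)"

text \<open>CP_U(X,Y) for the relevant pairs.\<close>
definition CP_A_Mn ::
  "('u::unital_cstar_algebra \<Rightarrow> 'a::unital_cstar_algebra \<Rightarrow> 'a)
     \<Rightarrow> ('a \<Rightarrow> 'u^'n::finite^'n) set" where
  "CP_A_Mn act = {\<phi>. module_map scC act mscC mlmult \<phi> \<and>
      completely_positive (*) adj (**) madj \<phi>}"

definition CP_MnA_U ::
  "('u::unital_cstar_algebra \<Rightarrow> 'a::unital_cstar_algebra \<Rightarrow> 'a)
     \<Rightarrow> ('a^'n::finite^'n \<Rightarrow> 'u) set" where
  "CP_MnA_U act = {\<psi>. module_map mscC (mact act) scC (*) \<psi> \<and>
      completely_positive (**) madj (*) adj \<psi>}"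

text \<open>The hat construction.\<close>
definition hat :: "('a \<Rightarrow> 'u::comm_monoid_add^'n::finite^'n) \<Rightarrow> 'a^'n^'n \<Rightarrow> 'u" where
  "hat \<phi> M = (\<Sum>i\<in>UNIV. \<Sum>j\<in>UNIV. \<phi> (M $ i $ j) $ i $ j)"

end

theory Submission
  imports Defs "HOL-Computational_Algebra.Formal_Power_Series"
begin


context unital_cstar_algebra
begin

lemma adj_one_aux: "adj 1 = 1"
proof -
  have "adj (adj 1 * 1) = adj 1 * adj (adj 1)" by (rule adj_mult)
  hence "adj (adj 1) = adj 1" by (simp only: adj_adj mult_1_right)
  thus ?thesis by (simp add: adj_adj)
qed

subclass real_normed_algebra_1
proof
  have "norm (adj 1 * 1) = norm (1::'a) * norm (1::'a)" by (rule cstar_identity)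
  hence "norm (1::'a) = norm (1::'a) * norm (1::'a)" by (simp add: adj_one_aux)
  moreover have "norm (1::'a) \<noteq> 0" by simp
  ultimately show "norm (1::'a) = 1"
    by (metis mult_cancel_right1)
qed

end

lemma adj_zero[simp]: "adj (0::'a::cstar_algebra) = 0"
  by (metis add_cancel_right_right adj_add)
lemma adj_adj'[simp]: "adj (adj (x::'a::cstar_algebra)) = x" by (rule adj_adj)
lemma adj_one[simp]: "adj (1::'a::unital_cstar_algebra) = 1" by (rule adj_one_aux)
lemma adj_add'[simp]: "adj (x + y::'a::cstar_algebra) = adj x + adj y" by (rule adj_add)
lemma adj_mult'[simp]: "adj (x * y::'a::cstar_algebra) = adj y * adj x" by (rule adj_mult)
lemma adj_minus[simp]: "adj (- x::'a::cstar_algebra) = - adj x"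
  by (metis add_eq_0_iff adj_add adj_zero add.right_inverse)
lemma adj_diff[simp]: "adj (x - y::'a::cstar_algebra) = adj x - adj y"
  by (metis adj_add adj_minus diff_conv_add_uminus)
lemma adj_scaleR[simp]: "adj (r *\<^sub>R x::'a::cstar_algebra) = r *\<^sub>R adj x"
  by (metis adj_scC complex_cnj_complex_of_real scC_of_real)
lemma adj_sum[simp]: "adj (sum f A::'a::cstar_algebra) = sum (\<lambda>i. adj (f i)) A"
  by (induction A rule: infinite_finite_induct) auto
lemma adj_power[simp]: "adj (x ^ n::'a::unital_cstar_algebra) = adj x ^ n"
  by (induction n) (auto simp: power_commutes)
lemma adj_of_real[simp]: "adj (of_real r::'a::unital_cstar_algebra) = of_real r"
  by (simp add: of_real_def)

lemma norm_adj_le: "norm (x::'a::cstar_algebra) \<le> norm (adj x)"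
proof (cases "x = 0")
  case False
  have "norm x * norm x = norm (adj x * x)" by (simp add: cstar_identity)
  also have "\<dots> \<le> norm (adj x) * norm x" by (rule norm_mult_ineq)
  finally show ?thesis using False by simp
qed simp

lemma norm_adj[simp]: "norm (adj (x::'a::cstar_algebra)) = norm x"
  by (metis norm_adj_le adj_adj antisym)

lemma cstar_id: "norm (adj x * x::'a::cstar_algebra) = norm x ^ 2"
  by (simp add: cstar_identity power2_eq_square)

lemma bounded_linear_adj: "bounded_linear (adj::'a::cstar_algebra \<Rightarrow> 'a)"
  by (rule bounded_linear_intro[where K=1]) auto

lemma scC_zero_left[simp]: "scC 0 x = (0::'a::cstar_algebra)"
  by (metis scC_of_real scaleR_zero_left of_real_0)
lemma scC_one[simp]: "scC 1 x = (x::'a::cstar_algebra)"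
  by (metis scC_of_real scaleR_one of_real_1)
lemma scC_zero_right[simp]: "scC c 0 = (0::'a::cstar_algebra)"
  by (metis add_cancel_right_right scC_add_right)
lemma scC_minus_right: "scC c (- x) = - scC c (x::'a::cstar_algebra)"
  by (metis add_eq_0_iff scC_add_right scC_zero_right add.right_inverse)
lemma scC_minus_left: "scC (- c) x = - scC c (x::'a::cstar_algebra)"
  by (metis add_eq_0_iff scC_add_left scC_zero_left add.right_inverse)
lemma scC_diff_right: "scC c (x - y) = scC c x - scC c (y::'a::cstar_algebra)"
  by (metis diff_conv_add_uminus scC_add_right scC_minus_right)

text \<open>Commutation\<close>
lemma commute_power: "z * y = y * z \<Longrightarrow> z * y ^ n = y ^ n * (z::'a::monoid_mult)"
  by (induction n) (simp_all add: mult.assoc[symmetric], metis mult.assoc)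



definition csq :: "nat \<Rightarrow> real" where
  "csq n = (-1) ^ n * ((1/2::real) gchoose n)"

lemma csq_0[simp]: "csq 0 = 1" by (simp add: csq_def)

lemma gchoose_Suc_rec: "(a::real) gchoose Suc n = (a gchoose n) * (a - real n) / (real n + 1)"
proof -
  have "(a gchoose Suc n) * fact (Suc n) = (\<Prod>i = 0..<Suc n. a - of_nat i)"
    by (rule gbinomial_mult_fact')
  also have "\<dots> = (\<Prod>i = 0..<n. a - of_nat i) * (a - real n)" by simp
  also have "\<dots> = (a gchoose n) * fact n * (a - real n)" by (simp add: gbinomial_mult_fact')
  finally have h: "((a gchoose Suc n) * (real n + 1)) * fact n = ((a gchoose n) * (a - real n)) * fact n"
    by (simp add: algebra_simps)
  have "fact n \<noteq> (0::real)" by simp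
  hence "(a gchoose Suc n) * (real n + 1) = (a gchoose n) * (a - real n)"
    using h by (metis mult_cancel_right)
  moreover have "real n + 1 \<noteq> 0" by simp
  ultimately show ?thesis by (simp add: field_simps)
qed

lemma csq_Suc: "csq (Suc n) = csq n * ((real n - 1/2) / (real n + 1))"
  unfolding csq_def gchoose_Suc_rec by (simp add: field_simps)

lemma csq_nonpos: "n \<ge> 1 \<Longrightarrow> csq n \<le> 0"
proof (induction n)
  case (Suc n)
  show ?case
  proof (cases "n = 0")
    case True thus ?thesis by (simp add: csq_Suc)
  next
    case False
    hence "csq n \<le> 0" using Suc by simp
    moreover have "(real n - 1/2) / (real n + 1) \<ge> 0" using False by simp
    ultimately show ?thesis unfolding csq_Suc by (rule mult_nonpos_nonneg)
  qed
qed simp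

lemma csq_partial_nonneg: "(\<Sum>k\<le>m. csq k) \<ge> 0"
proof -
  have "(\<Sum>k\<le>m. csq k) = (\<Sum>k\<le>m. ((1/2::real) gchoose k) * (-1) ^ k)"
    by (simp add: csq_def mult.commute)
  also have "\<dots> = (-1) ^ m * ((1/2 - 1) gchoose m)" by (rule gbinomial_sum_lower_neg)
  also have "((1/2::real) - 1) gchoose m = (-1) ^ m * ((real m - (1/2 - 1) - 1) gchoose m)"
    by (rule gbinomial_negated_upper)
  finally have eq: "(\<Sum>k\<le>m. csq k) = ((real m - 1/2) gchoose m)"
    by (simp add: power_mult_distrib[symmetric])
  have "((real m - 1/2) gchoose m) = (\<Prod>i = 0..<m. (real m - 1/2 - of_nat i) / of_nat (m - i))"
    by (rule gbinomial_altdef_of_nat)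
  also have "\<dots> \<ge> 0" by (rule prod_nonneg) (auto simp: of_nat_diff)
  finally show ?thesis using eq by simp
qed

lemma abs_csq_partial: "(\<Sum>k\<le>m. \<bar>csq k\<bar>) = 2 - (\<Sum>k\<le>m. csq k)"
proof (induction m)
  case (Suc m)
  have "\<bar>csq (Suc m)\<bar> = - csq (Suc m)" using csq_nonpos[of "Suc m"] by simp
  thus ?case using Suc by simp
qed simp

lemma summable_abs_csq: "summable (\<lambda>n. \<bar>csq n\<bar>)"
proof (rule summableI_nonneg_bounded[where x=2])
  fix n
  show "(\<Sum>i<n. \<bar>csq i\<bar>) \<le> 2"
  proof (cases n)
    case (Suc m)
    hence "{..<n} = {..m}" by auto
    thus ?thesis using abs_csq_partial[of m] csq_partial_nonneg[of m] by simp
  qed simp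
qed simp

lemma suminf_abs_csq: "(\<Sum>n. \<bar>csq n\<bar>) \<le> 2"
proof (rule suminf_le_const[OF summable_abs_csq])
  fix n
  show "(\<Sum>i<n. \<bar>csq i\<bar>) \<le> 2"
  proof (cases n)
    case (Suc m)
    hence "{..<n} = {..m}" by auto
    thus ?thesis using abs_csq_partial[of m] csq_partial_nonneg[of m] by simp
  qed simp
qed

lemma csq_conv: "(\<Sum>i\<le>k. csq i * csq (k - i)) = (if k = 0 then 1 else if k = 1 then -1 else 0)"
proof -
  have "(\<Sum>i\<le>k. csq i * csq (k - i)) = (\<Sum>i\<in>{0..k}. (-1)^k * (((1/2::real) gchoose i) * ((1/2) gchoose (k - i))))"
    unfolding csq_def atLeast0AtMost
    by (rule sum.cong) (auto simp: power_add[symmetric])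
  also have "\<dots> = (-1)^k * ((1/2 + 1/2::real) gchoose k)"
    by (simp add: sum_distrib_left[symmetric] gbinomial_Vandermonde)
  also have "\<dots> = (if k = 0 then 1 else if k = 1 then -1 else 0)"
  proof -
    have "fact k * ((1::real) gchoose k) = (\<Prod>i = 0..<k. 1 - of_nat i)" by (rule gbinomial_mult_fact)
    moreover have "k \<ge> 2 \<Longrightarrow> (\<Prod>i = 0..<k. (1::real) - of_nat i) = 0"
      using prod_zero[of "{0..<k}" "\<lambda>i. (1::real) - of_nat i"] by force
    ultimately have "k \<ge> 2 \<Longrightarrow> ((1::real) gchoose k) = 0" by simp
    thus ?thesis by (cases "k = 0"; cases "k = 1") auto
  qed
  finally show ?thesis .
qed

definition Ssq :: "'a::unital_cstar_algebra \<Rightarrow> 'a" where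
  "Ssq y = (\<Sum>n. csq n *\<^sub>R y ^ n)"

lemma Ssq_summable_norm:
  assumes "norm (y::'a::unital_cstar_algebra) \<le> 1"
  shows "summable (\<lambda>n. norm (csq n *\<^sub>R y ^ n))"
proof (rule summable_comparison_test[OF _ summable_abs_csq])
  show "\<exists>N. \<forall>n\<ge>N. norm (norm (csq n *\<^sub>R y ^ n)) \<le> \<bar>csq n\<bar>"
  proof (intro exI allI impI)
    fix n
    have "norm (y ^ n) \<le> norm y ^ n" by (rule norm_power_ineq)
    also have "\<dots> \<le> 1" using assms by (simp add: power_le_one)
    finally show "norm (norm (csq n *\<^sub>R y ^ n)) \<le> \<bar>csq n\<bar>"
      by (simp add: mult_left_le)
  qed
qed

lemma Ssq_summable: "norm (y::'a::unital_cstar_algebra) \<le> 1 \<Longrightarrow> summable (\<lambda>n. csq n *\<^sub>R y ^ n)"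
  by (rule summable_norm_cancel[OF Ssq_summable_norm])

lemma Ssq_sq:
  assumes "norm (y::'a::unital_cstar_algebra) \<le> 1"
  shows "Ssq y * Ssq y = 1 - y"
proof -
  have "Ssq y * Ssq y = (\<Sum>k. \<Sum>i\<le>k. (csq i *\<^sub>R y ^ i) * (csq (k - i) *\<^sub>R y ^ (k - i)))"
    unfolding Ssq_def by (rule Cauchy_product[OF Ssq_summable_norm[OF assms] Ssq_summable_norm[OF assms]])
  also have "\<dots> = (\<Sum>k. (\<Sum>i\<le>k. csq i * csq (k - i)) *\<^sub>R y ^ k)"
  proof (rule suminf_cong)
    fix k
    show "(\<Sum>i\<le>k. (csq i *\<^sub>R y ^ i) * (csq (k - i) *\<^sub>R y ^ (k - i))) = (\<Sum>i\<le>k. csq i * csq (k - i)) *\<^sub>R y ^ k"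
      unfolding scaleR_sum_left
      by (rule sum.cong) (auto simp: power_add[symmetric])
  qed
  also have "\<dots> = (\<Sum>k. (if k = 0 then 1 else if k = 1 then - y else 0))"
    by (rule suminf_cong) (simp add: csq_conv)
  also have "\<dots> = (\<Sum>k\<in>{0::nat,1}. (if k = 0 then 1 else if k = 1 then - y else 0))"
    using suminf_finite[of "{0::nat,1}" "\<lambda>k. if k = 0 then (1::'a) else if k = 1 then - y else 0"] by auto
  finally show ?thesis by simp
qed

lemma Ssq_commute:
  assumes "norm (y::'a::unital_cstar_algebra) \<le> 1" "z * y = y * z"
  shows "z * Ssq y = Ssq y * z"
proof -
  have "z * Ssq y = (\<Sum>n. z * (csq n *\<^sub>R y ^ n))"
    unfolding Ssq_def by (rule suminf_mult[symmetric, OF Ssq_summable[OF assms(1)]])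
  also have "\<dots> = (\<Sum>n. (csq n *\<^sub>R y ^ n) * z)"
    using commute_power[OF assms(2)] by (simp add: mult_scaleR_right)
  also have "\<dots> = Ssq y * z"
    unfolding Ssq_def by (rule suminf_mult2[symmetric, OF Ssq_summable[OF assms(1)]])
  finally show ?thesis .
qed

lemma Ssq_adj:
  assumes "norm (y::'a::unital_cstar_algebra) \<le> 1" "adj y = y"
  shows "adj (Ssq y) = Ssq y"
  unfolding Ssq_def
  using bounded_linear.suminf[OF bounded_linear_adj Ssq_summable[OF assms(1)]] assms(2) by simp

lemma Ssq_near_one:
  assumes "norm (y::'a::unital_cstar_algebra) \<le> 1"
  shows "norm (1 - Ssq y) \<le> 1"
proof -
  let ?f = "\<lambda>n. csq n *\<^sub>R y ^ n"
  have sf: "summable ?f" by (rule Ssq_summable[OF assms])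
  have "Ssq y = (\<Sum>n. ?f (n + 1)) + (\<Sum>i<1. ?f i)"
    unfolding Ssq_def by (rule suminf_split_initial_segment[OF sf])
  hence "1 - Ssq y = - (\<Sum>n. ?f (n + 1))" by simp
  hence "norm (1 - Ssq y) = norm (\<Sum>n. ?f (n + 1))" by simp
  also have "\<dots> \<le> (\<Sum>n. norm (?f (n + 1)))"
    by (rule summable_norm) (rule summable_ignore_initial_segment[OF Ssq_summable_norm[OF assms]])
  also have "\<dots> \<le> (\<Sum>n. \<bar>csq (n + 1)\<bar>)"
  proof (rule suminf_le)
    fix n
    have "norm (y ^ (n+1)) \<le> norm y ^ (n+1)" by (rule norm_power_ineq)
    also have "\<dots> \<le> 1" by (rule power_le_one) (use assms in auto)
    finally show "norm (?f (n + 1)) \<le> \<bar>csq (n + 1)\<bar>" by (simp add: mult_left_le)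
  qed (rule summable_ignore_initial_segment[OF Ssq_summable_norm[OF assms]],
       rule summable_ignore_initial_segment[OF summable_abs_csq])
  also have "\<dots> = (\<Sum>n. \<bar>csq n\<bar>) - 1"
    using suminf_split_initial_segment[OF summable_abs_csq, of 1] by simp
  also have "\<dots> \<le> 1" using suminf_abs_csq by simp
  finally show ?thesis .
qed



definition isinv :: "'a::ring_1 \<Rightarrow> bool" where
  "isinv x \<longleftrightarrow> (\<exists>y. x * y = 1 \<and> y * x = 1)"

definition Qp :: "'a::unital_cstar_algebra \<Rightarrow> bool" where
  "Qp a \<longleftrightarrow> adj a = a \<and> (\<exists>t\<ge>0. norm (of_real t - a) \<le> t)"

lemma of_real_commute: "of_real r * z = z * (of_real r :: 'a::real_algebra_1)"
  by (simp add: of_real_def)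

lemma isinv_lr: "l * x = 1 \<Longrightarrow> x * r = 1 \<Longrightarrow> isinv (x::'a::ring_1)"
  unfolding isinv_def by (metis mult.assoc mult_1_left mult_1_right)

lemma isinv_comm_factor:
  assumes "x * y = y * x" "isinv (x * (y::'a::ring_1))"
  shows "isinv x"
proof -
  obtain w where w: "x * y * w = 1" "w * (x * y) = 1" using assms(2) unfolding isinv_def by blast
  have "x * (y * w) = 1" using w by (simp add: mult.assoc)
  moreover have "(w * y) * x = 1" using w assms(1) by (simp add: mult.assoc)
  ultimately show ?thesis by (intro isinv_lr)
qed

lemma isinv_scale:
  assumes "r \<noteq> 0" "isinv (x::'a::real_algebra_1)"
  shows "isinv (r *\<^sub>R x)"
proof -
  obtain y where "x * y = 1" "y * x = 1" using assms(2) unfolding isinv_def by blast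
  hence "(r *\<^sub>R x) * ((1/r) *\<^sub>R y) = 1" "((1/r) *\<^sub>R y) * (r *\<^sub>R x) = 1"
    using assms(1) by simp_all
  thus ?thesis unfolding isinv_def by blast
qed

lemma isinv_abba:
  fixes x y :: "'a::real_algebra_1"
  assumes "r \<noteq> 0" "isinv (of_real r + x * y)"
  shows "isinv (of_real r + y * x)"
proof -
  obtain w where w: "(r *\<^sub>R 1 + x * y) * w = 1" "w * (r *\<^sub>R 1 + x * y) = 1"
    using assms(2) unfolding isinv_def of_real_def by blast
  let ?z = "(1/r) *\<^sub>R (1 - y * w * x)"
  have "(r *\<^sub>R 1 + y * x) * (1 - y * w * x) = r *\<^sub>R 1 + y * x - y * ((r *\<^sub>R 1 + x * y) * w) * x"
    by (simp add: algebra_simps mult.assoc)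
  also have "\<dots> = r *\<^sub>R 1" using w by simp
  finally have 1: "(r *\<^sub>R 1 + y * x) * ?z = 1" using assms(1)
    by (simp add: mult_scaleR_right)
  have "(1 - y * w * x) * (r *\<^sub>R 1 + y * x) = r *\<^sub>R 1 + y * x - y * (w * (r *\<^sub>R 1 + x * y)) * x"
    by (simp add: algebra_simps mult.assoc)
  also have "\<dots> = r *\<^sub>R 1" using w by simp
  finally have 2: "?z * (r *\<^sub>R 1 + y * x) = 1" using assms(1)
    by (simp add: mult_scaleR_left)
  show ?thesis using 1 2 unfolding isinv_def of_real_def by blast
qed

lemma neumann:
  fixes x :: "'a::{real_normed_algebra_1,banach}"
  assumes "norm x < 1"
  shows "isinv (1 - x)"
proof -
  have sn: "summable (\<lambda>n. norm (x ^ n))"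
    by (rule summable_comparison_test[OF _ summable_geometric[of "norm x"]])
       (use assms norm_power_ineq in auto)
  hence s: "summable (\<lambda>n. x ^ n)" by (rule summable_norm_cancel)
  have lim: "(\<lambda>n. x ^ n) \<longlonglongrightarrow> 0" by (rule LIMSEQ_power_zero[OF assms])
  have tel: "(\<lambda>n. x ^ n - x ^ Suc n) sums (x ^ 0 - 0)" by (rule telescope_sums'[OF lim])
  have "(1 - x) * (\<Sum>n. x ^ n) = (\<Sum>n. (1 - x) * x ^ n)" by (rule suminf_mult[symmetric, OF s])
  also have "\<dots> = (\<Sum>n. x ^ n - x ^ Suc n)" by (simp add: algebra_simps)
  also have "\<dots> = 1" using sums_unique[OF tel] by simp
  finally have 1: "(1 - x) * (\<Sum>n. x ^ n) = 1" .
  have "(\<Sum>n. x ^ n) * (1 - x) = (\<Sum>n. x ^ n * (1 - x))" by (rule suminf_mult2[OF s])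
  also have "\<dots> = (\<Sum>n. x ^ n - x ^ Suc n)" by (simp add: algebra_simps power_commutes)
  also have "\<dots> = 1" using sums_unique[OF tel] by simp
  finally have 2: "(\<Sum>n. x ^ n) * (1 - x) = 1" .
  show ?thesis using 1 2 unfolding isinv_def by blast
qed

section \<open>Positivity\<close>

lemma Qp_adj: "Qp a \<Longrightarrow> adj a = a" by (simp add: Qp_def)

lemma Qp_add: assumes "Qp a" "Qp b" shows "Qp (a + b)"
proof -
  obtain t s where "t \<ge> 0" "norm (of_real t - a) \<le> t" "s \<ge> 0" "norm (of_real s - b) \<le> s"
    using assms unfolding Qp_def by blast
  moreover have "norm (of_real (t + s) - (a + b)) \<le> norm (of_real t - a) + norm (of_real s - b)"
    by (metis (no_types, lifting) add_diff_add norm_triangle_ineq of_real_add)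
  ultimately show ?thesis using assms unfolding Qp_def
    by (intro conjI exI[where x="t+s"]) auto
qed

lemma Qp_scale: assumes "r \<ge> 0" "Qp a" shows "Qp (r *\<^sub>R a)"
proof -
  obtain t where t: "t \<ge> 0" "norm (of_real t - a) \<le> t" using assms unfolding Qp_def by blast
  have "of_real (r * t) - r *\<^sub>R a = r *\<^sub>R (of_real t - a)" by (simp add: scaleR_diff_right of_real_def)
  hence "norm (of_real (r * t) - r *\<^sub>R a) = r * norm (of_real t - a)" using assms(1) by simp
  also have "\<dots> \<le> r * t" using t assms(1) by (simp add: mult_left_mono)
  finally show ?thesis using assms t unfolding Qp_def by (intro conjI exI[where x="r*t"]) auto
qed

lemma Qp_of_real: "r \<ge> 0 \<Longrightarrow> Qp (of_real r :: 'a::unital_cstar_algebra)"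
  unfolding Qp_def by (intro conjI exI[where x=r]) auto

lemma Qp_zero[simp]: "Qp (0 :: 'a::unital_cstar_algebra)"
  using Qp_of_real[of 0] by simp

lemma Qp_sum: "(\<And>i. i \<in> A \<Longrightarrow> Qp (f i)) \<Longrightarrow> Qp (sum f A :: 'a::unital_cstar_algebra)"
  by (induction A rule: infinite_finite_induct) (auto intro: Qp_add)

lemma Qp_norm_minus: "adj a = a \<Longrightarrow> Qp (of_real (norm a) - a :: 'a::unital_cstar_algebra)"
  unfolding Qp_def by (intro conjI exI[where x="norm a"]) auto

lemma Qp_sqrt:
  fixes a :: "'a::unital_cstar_algebra"
  assumes "Qp a"
  shows "\<exists>b. adj b = b \<and> b * b = a \<and> Qp b \<and> (\<forall>z. z * a = a * z \<longrightarrow> z * b = b * z)"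
proof -
  obtain t where t: "t \<ge> 0" "norm (of_real t - a) \<le> t" and sa: "adj a = a"
    using assms unfolding Qp_def by blast
  show ?thesis
  proof (cases "t = 0")
    case True
    hence "a = 0" using t by simp
    thus ?thesis by (intro exI[where x=0]) auto
  next
    case False
    hence tp: "t > 0" using t by simp
    define y where "y = (1/t) *\<^sub>R (of_real t - a)"
    have ny: "norm y \<le> 1" unfolding y_def using t tp by (simp add: divide_le_eq_1)
    have sy: "adj y = y" unfolding y_def using sa by simp
    define s where "s = Ssq y"
    have ss: "s * s = 1 - y" unfolding s_def by (rule Ssq_sq[OF ny])
    have s_sa: "adj s = s" unfolding s_def by (rule Ssq_adj[OF ny sy])
    have qs: "Qp s" unfolding Qp_def using Ssq_near_one[OF ny] s_sa
      by (intro conjI exI[where x=1]) (auto simp: s_def)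
    define b where "b = sqrt t *\<^sub>R s"
    have "b * b = (sqrt t * sqrt t) *\<^sub>R (s * s)" unfolding b_def by simp
    also have "\<dots> = t *\<^sub>R (1 - y)" using t ss by simp
    also have "\<dots> = a" unfolding y_def of_real_def using tp by (simp add: scaleR_diff_right)
    finally have bb: "b * b = a" .
    have "\<forall>z. z * a = a * z \<longrightarrow> z * b = b * z"
    proof (intro allI impI)
      fix z assume za: "z * a = a * z"
      have "z * y = y * z" unfolding y_def of_real_def
        using za by (simp add: algebra_simps)
      hence "z * s = s * z" unfolding s_def by (rule Ssq_commute[OF ny])
      thus "z * b = b * z" unfolding b_def by simp
    qed
    moreover have "adj b = b" unfolding b_def using s_sa by simp
    moreover have "Qp b" unfolding b_def using qs t by (intro Qp_scale) auto
    ultimately show ?thesis using bb by blast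
  qed
qed

lemma unitary_bound:
  fixes v w :: "'a::unital_cstar_algebra"
  assumes "adj v = v" "adj w = w" "v * w = w * v" "v * v + w * w = 1"
  shows "norm v \<le> 1"
proof -
  define u where "u = v + scC \<i> w"
  have au: "adj u = v + scC (- \<i>) w" unfolding u_def using assms by (simp add: adj_scC)
  have "adj u * u = v * v + w * w"
  proof -
    have "adj u * u = (v + scC (- \<i>) w) * (v + scC \<i> w)" using au u_def by simp
    also have "\<dots> = v * v + v * scC \<i> w + scC (- \<i>) w * v + scC (- \<i>) w * scC \<i> w"
      by (simp add: algebra_simps)
    also have "v * scC \<i> w = scC \<i> (v * w)" by (simp add: scC_mult_right)
    also have "scC (- \<i>) w * v = - scC \<i> (v * w)" by (simp add: scC_mult_left scC_minus_left assms(3))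
    also have "scC (- \<i>) w * scC \<i> w = w * w"
      by (simp add: scC_mult_left scC_mult_right[symmetric] scC_scC)
    finally show ?thesis by simp
  qed
  hence "adj u * u = 1" using assms(4) by simp
  hence "norm u ^ 2 = 1" using cstar_id[of u] by simp
  hence nu: "norm u = 1" by (simp add: power2_eq_1_iff) (metis norm_ge_zero neg_0_le_iff_le zero_le_one antisym not_one_le_zero)
  have "u + adj u = (v + scC \<i> w) + (v + scC (- \<i>) w)" using au u_def by simp
  also have "\<dots> = 2 *\<^sub>R v" by (simp add: scC_minus_left scaleR_2)
  finally have "u + adj u = 2 *\<^sub>R v" .
  hence "v = (1/2) *\<^sub>R (u + adj u)" by simp
  hence "norm v \<le> (1/2) * (norm u + norm (adj u))"
    by (metis norm_scaleR norm_triangle_ineq abs_of_nonneg less_eq_real_def divide_pos_pos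
        zero_less_one zero_less_numeral mult_left_mono)
  thus ?thesis using nu by simp
qed

lemma sq_bound:
  fixes h :: "'a::unital_cstar_algebra"
  assumes "adj h = h"
  shows "norm (of_real (norm h ^ 2) - h * h) \<le> norm h ^ 2"
proof (cases "h = 0")
  case False
  define m where "m = norm h"
  have mp: "m > 0" using False unfolding m_def by simp
  define h' where "h' = (1/m) *\<^sub>R h"
  have nh': "norm h' = 1" unfolding h'_def m_def using False by simp
  have sh': "adj h' = h'" unfolding h'_def using assms by simp
  define y where "y = h' * h'"
  have ny: "norm y \<le> 1" unfolding y_def using norm_mult_ineq[of h' h'] nh' by simp
  have sy: "adj y = y" unfolding y_def using sh' by simp
  define g where "g = Ssq y"
  have gg: "g * g = 1 - y" unfolding g_def by (rule Ssq_sq[OF ny])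
  have sg: "adj g = g" unfolding g_def by (rule Ssq_adj[OF ny sy])
  have cg: "h' * g = g * h'" unfolding g_def by (rule Ssq_commute[OF ny]) (simp add: y_def mult.assoc)
  have "norm g \<le> 1" by (rule unitary_bound[OF sg sh' cg[symmetric]]) (simp add: gg y_def)
  hence "norm (1 - h' * h') \<le> 1"
    using cstar_id[of g] sg gg unfolding y_def by (simp add: power_le_one)
  moreover have "of_real (m ^ 2) - h * h = (m ^ 2) *\<^sub>R (1 - h' * h')"
    unfolding h'_def of_real_def using mp by (simp add: scaleR_diff_right power2_eq_square)
  ultimately have "norm (of_real (m ^ 2) - h * h) \<le> m ^ 2"
    by (simp add: mult_left_le)
  thus ?thesis unfolding m_def .
qed simp

lemma Qp_sq: "adj h = h \<Longrightarrow> Qp (h * (h::'a::unital_cstar_algebra))"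
  unfolding Qp_def using sq_bound[of h] by (intro conjI exI[where x="norm h ^ 2"]) auto



lemma norm_sq_sa: "adj v = v \<Longrightarrow> norm (v * v :: 'a::cstar_algebra) = norm v ^ 2"
  using cstar_id[of v] by simp

lemma Qp_norm_ge:
  fixes a :: "'a::unital_cstar_algebra"
  assumes "Qp a" "s \<ge> norm a"
  shows "norm (of_real s - a) \<le> s"
proof -
  obtain b where b: "adj b = b" "b * b = a" using Qp_sqrt[OF assms(1)] by blast
  have na: "norm a = norm b ^ 2" using norm_sq_sa[OF b(1)] b(2) by simp
  have "of_real s - a = of_real (s - norm a) + (of_real (norm b ^ 2) - b * b)"
    using na b(2) by (simp add: of_real_diff)
  hence n0: "norm (of_real s - a) \<le> norm (of_real (s - norm a) :: 'a) + norm (of_real (norm b ^ 2) - b * b)"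
    by (metis norm_triangle_ineq)
  have n1: "norm (of_real (s - norm a) :: 'a) = s - norm a" by (simp only: norm_of_real) (use assms(2) in simp)
  have n2: "norm (of_real (norm b ^ 2) - b * b) \<le> norm b ^ 2" using sq_bound[OF b(1)] .
  show ?thesis using n0 n1 n2 na by linarith
qed

lemma Qp_bound_pos:
  fixes a :: "'a::unital_cstar_algebra"
  assumes "Qp a" "c > 0" "Qp (of_real c - a)"
  shows "norm a \<le> c"
proof -
  obtain v where v: "adj v = v" "v * v = a" "\<forall>z. z * a = a * z \<longrightarrow> z * v = v * z"
    using Qp_sqrt[OF assms(1)] by blast
  obtain w where w: "adj w = w" "w * w = of_real c - a"
    "\<forall>z. z * (of_real c - a) = (of_real c - a) * z \<longrightarrow> z * w = w * z"
    using Qp_sqrt[OF assms(3)] by blast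
  have av: "v * a = a * v" using v(2) by (metis mult.assoc)
  have "v * (of_real c - a) = (of_real c - a) * v"
    using av by (simp add: algebra_simps of_real_def)
  hence vw: "v * w = w * v" using w(3) by blast
  define v' where "v' = (1 / sqrt c) *\<^sub>R v"
  define w' where "w' = (1 / sqrt c) *\<^sub>R w"
  have "v' * v' + w' * w' = (1/c) *\<^sub>R (v * v + w * w)"
    unfolding v'_def w'_def using assms(2) by (simp add: scaleR_add_right)
  also have "\<dots> = 1" using v(2) w(2) assms(2) by (simp add: of_real_def)
  finally have "v' * v' + w' * w' = 1" .
  moreover have "v' * w' = w' * v'" unfolding v'_def w'_def using vw by simp
  moreover have "adj v' = v'" "adj w' = w'" unfolding v'_def w'_def using v(1) w(1) by simp_all
  ultimately have "norm v' \<le> 1" using unitary_bound by metis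
  hence "norm v \<le> sqrt c" unfolding v'_def using assms(2) by (simp add: divide_le_eq)
  hence "norm v ^ 2 \<le> sqrt c ^ 2" by (simp add: power_mono)
  thus ?thesis using norm_sq_sa[OF v(1)] v(2) assms(2) by simp
qed

lemma Qp_bound:
  fixes a :: "'a::unital_cstar_algebra"
  assumes "Qp a" "c \<ge> 0" "Qp (of_real c - a)"
  shows "norm a \<le> c"
proof (rule field_le_epsilon)
  fix e :: real assume e: "e > 0"
  have "Qp (of_real (c + e) - a)"
    using Qp_add[OF assms(3) Qp_of_real[of e]] e by (simp add: algebra_simps)
  thus "norm a \<le> c + e" using Qp_bound_pos[OF assms(1)] assms(2) e by simp
qed

lemma Qp_inv:
  fixes a :: "'a::unital_cstar_algebra"
  assumes "Qp a" "l > 0"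
  shows "isinv (of_real l + a)"
proof -
  obtain t where t: "t \<ge> 0" "norm (of_real t - a) \<le> t" using assms unfolding Qp_def by blast
  define x where "x = (1 / (l + t)) *\<^sub>R (of_real t - a)"
  have "norm x = norm (of_real t - a) / (l + t)" unfolding x_def using t assms(2) by simp
  also have "\<dots> \<le> t / (l + t)" using t assms(2) by (simp add: divide_right_mono)
  also have "\<dots> < 1" using t assms(2) by simp
  finally have "isinv (1 - x)" by (intro neumann)
  hence "isinv ((l + t) *\<^sub>R (1 - x))" using t assms(2) by (intro isinv_scale) auto
  moreover have "(l + t) *\<^sub>R (1 - x) = of_real l + a"
  proof -
    have lt: "(l + t) * (1 / (l + t)) = 1" using t assms(2) by simp
    have "(l + t) *\<^sub>R (1 - x) = (l+t) *\<^sub>R 1 - ((l+t) * (1/(l+t))) *\<^sub>R (of_real t - a)"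
      unfolding x_def by (simp only: scaleR_diff_right scaleR_scaleR)
    also have "\<dots> = (l+t) *\<^sub>R 1 - (of_real t - a)" by (simp only: lt scaleR_one)
    also have "\<dots> = of_real l + a" by (simp add: of_real_def algebra_simps)
    finally show ?thesis .
  qed
  ultimately show ?thesis by simp
qed

lemma Qp_not_inv_core:
  fixes u :: "'a::unital_cstar_algebra"
  assumes qu: "Qp u" and nu: "norm u = 1" and inv: "isinv (1 - u)"
  shows False
proof -
  define g where "g = 1 - u"
  have su: "adj u = u" using qu by (rule Qp_adj)
  have sg: "adj g = g" unfolding g_def using su by simp
  have qg: "Qp g" unfolding Qp_def g_def using su nu by (intro conjI exI[where x=1]) auto
  have ng: "norm g \<le> 1" unfolding g_def using Qp_norm_ge[OF qu, of 1] nu by simp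
  obtain gi where gi: "g * gi = 1" "gi * g = 1" using inv unfolding isinv_def g_def by blast
  have sgi: "adj gi = gi"
  proof -
    have "adj gi * g = 1" using arg_cong[OF gi(1), of adj] sg by simp
    hence "gi = (adj gi * g) * gi" by simp
    also have "\<dots> = adj gi" using gi(1) by (simp add: mult.assoc)
    finally show ?thesis by simp
  qed
  obtain h where h: "adj h = h" "h * h = g" "\<forall>z. z * g = g * z \<longrightarrow> z * h = h * z"
    using Qp_sqrt[OF qg] by blast
  have hgi: "gi * h = h * gi" using h(3) gi by simp
  define hi where "hi = h * gi"
  have "hi * hi = gi"
  proof -
    have "hi * hi = h * (gi * h) * gi" unfolding hi_def by (simp add: mult.assoc)
    also have "\<dots> = (h * h) * gi * gi" using hgi by (simp add: mult.assoc)
    also have "\<dots> = gi" using h(2) gi(1) by simp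
    finally show ?thesis .
  qed
  moreover have "adj hi = hi" unfolding hi_def using h(1) sgi hgi by simp
  ultimately have qgi: "Qp gi" using Qp_sq[of hi] by simp
  define M where "M = norm gi"
  have "gi \<noteq> 0" using gi(1) by auto
  hence Mp: "M > 0" unfolding M_def by simp
  have "1 = norm (g * gi)" using gi(1) by simp
  also have "\<dots> \<le> norm g * M" unfolding M_def by (rule norm_mult_ineq)
  also have "\<dots> \<le> M" using ng Mp by (simp add: mult_left_le_one_le)
  finally have M1: "M \<ge> 1" .
  have qM: "Qp (of_real M - gi)" unfolding M_def using sgi by (rule Qp_norm_minus)
  obtain r where r: "adj r = r" "r * r = of_real M - gi"
    "\<forall>z. z * (of_real M - gi) = (of_real M - gi) * z \<longrightarrow> z * r = r * z"
    using Qp_sqrt[OF qM] by blast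
  have "h * (of_real M - gi) = (of_real M - gi) * h"
    using hgi by (simp add: algebra_simps of_real_def)
  hence rh: "h * r = r * h" using r(3) by blast
  have "(r * h) * (r * h) = r * ((h * r) * h)" by (simp only: mult.assoc)
  also have "\<dots> = r * ((r * h) * h)" by (simp only: rh)
  also have "\<dots> = (r * r) * (h * h)" by (simp only: mult.assoc)
  finally have "(r * h) * (r * h) = (r * r) * (h * h)" .
  have "(r * h) * (r * h) = (r * r) * (h * h)" by fact
  also have "\<dots> = (of_real M - gi) * g" by (simp only: r(2) h(2))
  also have "\<dots> = M *\<^sub>R g - 1" by (simp add: left_diff_distrib gi(2) of_real_def)
  finally have "Qp (M *\<^sub>R g - 1)" using Qp_sq[of "r * h"] r(1) h(1) rh by simp
  hence "Qp ((1/M) *\<^sub>R (M *\<^sub>R g - 1))" using Mp by (intro Qp_scale) auto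
  moreover have "(1/M) *\<^sub>R (M *\<^sub>R g - 1) = of_real (1 - 1/M) - u"
    unfolding g_def of_real_def using Mp by (simp add: scaleR_diff_right algebra_simps)
  ultimately have "Qp (of_real (1 - 1/M) - u)" by simp
  hence "norm u \<le> 1 - 1/M" using Qp_bound[OF qu] M1 by simp
  thus False using nu Mp by simp
qed

lemma Qp_not_inv:
  fixes u :: "'a::unital_cstar_algebra"
  assumes qu: "Qp u" and u0: "u \<noteq> 0"
  shows "\<not> isinv (of_real (norm u) - u)"
proof
  assume inv: "isinv (of_real (norm u) - u)"
  define m where "m = norm u"
  have mp: "m > 0" using u0 unfolding m_def by simp
  define u' where "u' = (1/m) *\<^sub>R u"
  have "Qp u'" unfolding u'_def using qu mp by (intro Qp_scale) auto
  moreover have "norm u' = 1" unfolding u'_def m_def using u0 by simp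
  moreover have "isinv ((1/m) *\<^sub>R (of_real m - u))" using inv mp unfolding m_def
    by (intro isinv_scale) auto
  moreover have "(1/m) *\<^sub>R (of_real m - u) = 1 - u'"
    unfolding u'_def of_real_def using mp by (simp add: scaleR_diff_right)
  ultimately show False using Qp_not_inv_core by metis
qed

lemma Qp_char:
  fixes a :: "'a::unital_cstar_algebra"
  assumes sa: "adj a = a" and inv: "\<And>l. l > 0 \<Longrightarrow> isinv (of_real l + a)"
  shows "Qp a"
proof -
  define m where "m = norm a"
  define v where "v = of_real m - a"
  have qv: "Qp v" unfolding v_def m_def using sa by (rule Qp_norm_minus)
  have "norm v \<le> m"
  proof (cases "v = 0")
    case False
    have ni: "\<not> isinv (of_real (norm v) - v)" by (rule Qp_not_inv[OF qv False])
    show ?thesis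
    proof (rule ccontr)
      assume "\<not> norm v \<le> m"
      hence "norm v - m > 0" by simp
      hence i1: "isinv (of_real (norm v - m) + a)" by (rule inv)
      have eq: "of_real (norm v - m) + a = of_real (norm v) - v"
        by (simp add: v_def of_real_diff algebra_simps)
      show False using ni i1 eq by metis
    qed
  qed (simp add: m_def)
  thus ?thesis unfolding Qp_def v_def m_def using sa by (intro conjI exI[where x="norm a"]) auto
qed

lemma Qp_skew:
  fixes x :: "'a::unital_cstar_algebra"
  assumes "adj x = - x"
  shows "Qp (adj x * x)"
proof -
  define h where "h = scC (- \<i>) x"
  have "adj h = h" unfolding h_def using assms by (simp add: adj_scC scC_minus_right scC_minus_left)
  moreover have "h * h = adj x * x"
  proof -
    have "h * h = scC (- \<i>) (scC (- \<i>) (x * x))" unfolding h_def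
      by (simp only: scC_mult_left scC_mult_right[symmetric])
    also have "\<dots> = scC (- 1) (x * x)" by (simp add: scC_scC)
    also have "\<dots> = - (x * x)" by (simp only: scC_minus_left scC_one)
    also have "\<dots> = adj x * x" using assms by simp
    finally show ?thesis .
  qed
  ultimately show ?thesis using Qp_sq[of h] by simp
qed

lemma Qp_kap_lemma:
  fixes y :: "'a::unital_cstar_algebra"
  assumes q: "Qp (- (adj y * y))"
  shows "y = 0"
proof (rule ccontr)
  assume y0: "y \<noteq> 0"
  define s where "s = (1/2) *\<^sub>R (y + adj y)"
  define k where "k = (1/2) *\<^sub>R (y - adj y)"
  have ss: "adj s = s" unfolding s_def by (simp add: add.commute)
  have sk: "adj k = - k" unfolding k_def by (simp add: algebra_simps)
  have e1: "(y + adj y) + (y - adj y) = 2 *\<^sub>R y" by (simp add: scaleR_2)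
  have e2: "(y + adj y) - (y - adj y) = 2 *\<^sub>R adj y" by (simp add: scaleR_2)
  have "s + k = (1/2) *\<^sub>R ((y + adj y) + (y - adj y))" unfolding s_def k_def by (simp only: scaleR_add_right)
  also have "\<dots> = y" by (simp only: e1) simp
  finally have ys1: "y = s + k" by simp
  have "s - k = (1/2) *\<^sub>R ((y + adj y) - (y - adj y))" unfolding s_def k_def by (simp only: scaleR_diff_right)
  also have "\<dots> = adj y" by (simp only: e2) simp
  finally have ys2: "adj y = s - k" by simp
  note ys = ys1 ys2
  have "y * adj y = 2 *\<^sub>R (s * s) + 2 *\<^sub>R (adj k * k) + (- (adj y * y))"
  proof -
    have A: "y * adj y = (s + k) * (s - k)" by (subst ys(2), subst ys(1)) (rule refl)
    have B: "adj y * y = (s - k) * (s + k)" by (subst ys(2), subst ys(1)) (rule refl)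
    have C: "adj k * k = - (k * k)" using sk by simp
    show ?thesis unfolding A B C by (simp add: algebra_simps scaleR_2)
  qed
  moreover have "Qp (2 *\<^sub>R (s * s) + 2 *\<^sub>R (adj k * k) + (- (adj y * y)))"
    by (intro Qp_add Qp_scale Qp_sq[OF ss] Qp_skew[OF sk] q) auto
  ultimately have qyy: "Qp (y * adj y)" by simp
  define m where "m = norm (- (adj y * y))"
  have "m = norm y ^ 2" unfolding m_def by (simp add: cstar_id)
  hence mp: "m > 0" using y0 by simp
  have "- (adj y * y) \<noteq> 0" using mp unfolding m_def by auto
  from Qp_not_inv[OF q this] have ni: "\<not> isinv (of_real m + adj y * y)" unfolding m_def by simp
  have "isinv (of_real m + y * adj y)" by (rule Qp_inv[OF qyy mp])
  hence "isinv (of_real m + adj y * y)" using mp isinv_abba[of m y "adj y"] by simp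
  thus False using ni by simp
qed

lemma Qp_decomp:
  fixes a :: "'a::unital_cstar_algebra"
  assumes sa: "adj a = a"
  shows "\<exists>P N. Qp P \<and> Qp N \<and> N * P = 0 \<and> P * N = 0 \<and> a = (1/2) *\<^sub>R (P - N)"
proof -
  obtain k where k: "adj k = k" "k * k = a * a" "Qp k" "\<forall>z. z * (a * a) = (a * a) * z \<longrightarrow> z * k = k * z"
    using Qp_sqrt[OF Qp_sq[OF sa]] by blast
  have ak: "a * k = k * a" using k(4) by (simp add: mult.assoc)
  define P where "P = k + a"
  define N where "N = k - a"
  have PN: "P * N = 0" unfolding P_def N_def using k(2) ak by (simp add: algebra_simps)
  have NP: "N * P = 0" unfolding P_def N_def using k(2) ak by (simp add: algebra_simps)
  have q2k: "Qp (2 *\<^sub>R k)" using k(3) by (intro Qp_scale) auto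
  have prod: "(of_real l + P) * (of_real l + N) = l *\<^sub>R (of_real l + 2 *\<^sub>R k)"
    "(of_real l + N) * (of_real l + P) = l *\<^sub>R (of_real l + 2 *\<^sub>R k)" for l :: real
    unfolding of_real_def using PN NP
    by (simp_all add: algebra_simps P_def N_def scaleR_2)
  have invp: "isinv ((of_real l + P) * (of_real l + N))" "isinv ((of_real l + N) * (of_real l + P))"
    if "l > 0" for l :: real
    unfolding prod using that Qp_inv[OF q2k that] by (auto intro: isinv_scale)
  have "Qp P"
  proof (rule Qp_char)
    show "adj P = P" by (simp add: P_def k(1) sa)
    fix l :: real assume "l > 0"
    show "isinv (of_real l + P)" by (rule isinv_comm_factor[OF _ invp(1)[OF \<open>l > 0\<close>]]) (simp only: prod)
  qed
  moreover have "Qp N"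
  proof (rule Qp_char)
    show "adj N = N" by (simp add: N_def k(1) sa)
    fix l :: real assume "l > 0"
    show "isinv (of_real l + N)" by (rule isinv_comm_factor[OF _ invp(2)[OF \<open>l > 0\<close>]]) (simp only: prod)
  qed
  moreover have "a = (1/2) *\<^sub>R (P - N)" unfolding P_def N_def by (simp add: scaleR_2[symmetric])
  ultimately show ?thesis using PN NP by blast
qed

theorem kaplansky: "Qp (adj x * (x::'a::unital_cstar_algebra))"
proof -
  define a where "a = adj x * x"
  have sa: "adj a = a" unfolding a_def by simp
  obtain P N where PN: "Qp P" "Qp N" "N * P = 0" "P * N = 0" "a = (1/2) *\<^sub>R (P - N)"
    using Qp_decomp[OF sa] by blast
  have sN: "adj N = N" using PN(2) by (rule Qp_adj)
  obtain r where r: "adj r = r" "r * r = N" "\<forall>z. z * N = N * z \<longrightarrow> z * r = r * z"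
    using Qp_sqrt[OF PN(2)] by blast
  have rN: "N * r = r * N" using r(3) by blast
  have "(r * N) * (r * N) = r * ((N * r) * N)" by (simp only: mult.assoc)
  also have "\<dots> = r * ((r * N) * N)" by (simp only: rN)
  also have "\<dots> = (r * r) * N * N" by (simp only: mult.assoc)
  finally have "(r * N) * (r * N) = N * N * N" using r(2) by simp
  moreover have "adj (r * N) = r * N" using sN r(1) rN by simp
  ultimately have qN3: "Qp (N * N * N)" using Qp_sq[of "r * N"] by simp
  define y where "y = x * N"
  have "adj y * y = N * a * N" unfolding y_def a_def using sN by (simp add: mult.assoc)
  also have "\<dots> = (1/2) *\<^sub>R (N * P * N - N * N * N)" unfolding PN(5)
    by (simp add: algebra_simps)
  also have "\<dots> = - ((1/2) *\<^sub>R (N * N * N))" using PN(3) by simp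
  finally have "- (adj y * y) = (1/2) *\<^sub>R (N * N * N)" by simp
  hence "Qp (- (adj y * y))" using qN3 by (simp add: Qp_scale)
  hence "y = 0" by (rule Qp_kap_lemma)
  hence "N * N * N = 0" using \<open>- (adj y * y) = (1/2) *\<^sub>R (N * N * N)\<close> by simp
  hence "(N * N) * (N * N) = 0" by (metis mult.assoc mult_zero_right)
  hence "norm (N * N) ^ 2 = 0" using norm_sq_sa[of "N * N"] sN by simp
  hence "norm N ^ 2 = 0" using norm_sq_sa[OF sN] by simp
  hence "N = 0" by simp
  hence "a = (1/2) *\<^sub>R P" using PN(5) by simp
  thus ?thesis unfolding a_def using PN(1) by (simp add: Qp_scale)
qed

lemma Qp_conj: "Qp a \<Longrightarrow> Qp (adj c * a * (c::'a::unital_cstar_algebra))"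
proof -
  assume "Qp a"
  then obtain b where b: "adj b = b" "b * b = a" using Qp_sqrt by blast
  have "adj c * a * c = adj c * (b * b) * c" using b by simp
  also have "\<dots> = adj (b * c) * (b * c)" using b(1) by (simp add: mult.assoc)
  finally have "adj c * a * c = adj (b * c) * (b * c)" .
  thus ?thesis using kaplansky[of "b * c"] by simp
qed

lemma Qp_mono:
  fixes a b :: "'a::unital_cstar_algebra"
  assumes "Qp a" "Qp (b - a)"
  shows "norm a \<le> norm b"
proof -
  have "Qp b" using Qp_add[OF assms] by simp
  hence "adj b = b" by (rule Qp_adj)
  hence "Qp (of_real (norm b) - b)" by (rule Qp_norm_minus)
  hence "Qp (of_real (norm b) - a)" using Qp_add[OF _ assms(2)] by fastforce
  thus ?thesis using Qp_bound[OF assms(1)] by simp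
qed



definition ipk :: "nat \<Rightarrow> (nat \<Rightarrow> 'a) \<Rightarrow> (nat \<Rightarrow> 'a) \<Rightarrow> 'a::cstar_algebra" where
  "ipk k \<xi> \<eta> = (\<Sum>p<k. adj (\<xi> p) * \<eta> p)"

definition mvk :: "nat \<Rightarrow> (nat \<Rightarrow> nat \<Rightarrow> 'a) \<Rightarrow> (nat \<Rightarrow> 'a) \<Rightarrow> nat \<Rightarrow> 'a::semiring_0" where
  "mvk k M \<xi> p = (\<Sum>q<k. M p q * \<xi> q)"

definition mmk :: "nat \<Rightarrow> (nat \<Rightarrow> nat \<Rightarrow> 'a) \<Rightarrow> (nat \<Rightarrow> nat \<Rightarrow> 'a) \<Rightarrow> nat \<Rightarrow> nat \<Rightarrow> 'a::semiring_0" where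
  "mmk k A B p q = (\<Sum>l<k. A p l * B l q)"

primrec mpow :: "nat \<Rightarrow> (nat \<Rightarrow> nat \<Rightarrow> 'a) \<Rightarrow> nat \<Rightarrow> nat \<Rightarrow> nat \<Rightarrow> 'a::ring_1" where
  "mpow k C 0 = (\<lambda>p q. if p = q then 1 else 0)"
| "mpow k C (Suc n) = mmk k C (mpow k C n)"

lemma mmk_assoc: "mmk k (mmk k A B) D p q = mmk k A (mmk k B D) p q"
  unfolding mmk_def by (simp add: sum_distrib_left sum_distrib_right mult.assoc) (rule sum.swap)

lemma mmk_id_left: fixes X :: "nat \<Rightarrow> nat \<Rightarrow> 'a::ring_1" shows "p < k \<Longrightarrow> mmk k (\<lambda>a b. if a = b then 1 else 0) X p q = X p q"
proof -
  assume pk: "p < k"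
  have "mmk k (\<lambda>a b. if a = b then 1 else 0) X p q = (\<Sum>l<k. if l = p then X p q else 0)"
    unfolding mmk_def by (rule sum.cong) auto
  thus ?thesis using pk by simp
qed

lemma mmk_id_right: fixes X :: "nat \<Rightarrow> nat \<Rightarrow> 'a::ring_1" shows "q < k \<Longrightarrow> mmk k X (\<lambda>a b. if a = b then 1 else 0) p q = X p q"
proof -
  assume qk: "q < k"
  have "mmk k X (\<lambda>a b. if a = b then 1 else 0) p q = (\<Sum>l<k. if l = q then X p q else 0)"
    unfolding mmk_def by (rule sum.cong) auto
  thus ?thesis using qk by simp
qed

lemma mmk_cong: "(\<And>l. l < k \<Longrightarrow> B l q = B' l q) \<Longrightarrow> mmk k A B p q = mmk k A B' p q"
  unfolding mmk_def by (rule sum.cong) auto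

lemma mmk_cong_left: "(\<And>l. l < k \<Longrightarrow> A p l = A' p l) \<Longrightarrow> mmk k A B p q = mmk k A' B p q"
  unfolding mmk_def by (rule sum.cong) auto

lemma mpow_add: "p < k \<Longrightarrow> q < k \<Longrightarrow> mmk k (mpow k C i) (mpow k C j) p q = mpow k C (i + j) p q"
proof (induction i arbitrary: p q)
  case 0 thus ?case by (simp add: mmk_id_left)
next
  case (Suc i)
  have "mmk k (mpow k C (Suc i)) (mpow k C j) p q = mmk k C (mmk k (mpow k C i) (mpow k C j)) p q"
    by (simp add: mmk_assoc)
  also have "\<dots> = mmk k C (mpow k C (i + j)) p q"
    by (rule mmk_cong) (use Suc in auto)
  finally show ?case by simp
qed

lemma mpow_comm: "p < k \<Longrightarrow> q < k \<Longrightarrow> mpow k C (Suc n) p q = mmk k (mpow k C n) C p q"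
proof (induction n arbitrary: p q)
  case 0 thus ?case by (simp add: mmk_id_left mmk_id_right)
next
  case (Suc n)
  have "mpow k C (Suc (Suc n)) p q = mmk k C (mmk k (mpow k C n) C) p q"
    by simp (rule mmk_cong, use Suc in auto)
  also have "\<dots> = mmk k (mmk k C (mpow k C n)) C p q" by (simp add: mmk_assoc)
  finally show ?case by simp
qed

lemma mpow_sym:
  fixes C :: "nat \<Rightarrow> nat \<Rightarrow> 'a::unital_cstar_algebra"
  assumes Cs: "\<And>p q. p < k \<Longrightarrow> q < k \<Longrightarrow> adj (C p q) = C q p"
  shows "p < k \<Longrightarrow> q < k \<Longrightarrow> adj (mpow k C n p q) = mpow k C n q p"
proof (induction n arbitrary: p q)
  case (Suc n)
  have "adj (mpow k C (Suc n) p q) = (\<Sum>l<k. adj (mpow k C n l q) * adj (C p l))"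
    by (simp add: mmk_def)
  also have "\<dots> = (\<Sum>l<k. mpow k C n q l * C l p)"
    by (rule sum.cong) (use Suc Cs in auto)
  also have "\<dots> = mmk k (mpow k C n) C q p" by (simp add: mmk_def)
  also have "\<dots> = mpow k C (Suc n) q p" using mpow_comm Suc by metis
  finally show ?case .
qed simp

lemma Qp_ipk: "Qp (ipk k \<xi> \<xi>)"
  unfolding ipk_def by (rule Qp_sum) (rule kaplansky)

lemma entry_le_ipk:
  fixes \<xi> :: "nat \<Rightarrow> 'a::unital_cstar_algebra"
  assumes "p < k"
  shows "norm (\<xi> p) ^ 2 \<le> norm (ipk k \<xi> \<xi>)"
proof -
  have "ipk k \<xi> \<xi> - adj (\<xi> p) * \<xi> p = (\<Sum>p'\<in>{..<k} - {p}. adj (\<xi> p') * \<xi> p')"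
    unfolding ipk_def using assms by (simp add: sum_diff1)
  hence "Qp (ipk k \<xi> \<xi> - adj (\<xi> p) * \<xi> p)" by (simp add: Qp_sum kaplansky)
  hence "norm (adj (\<xi> p) * \<xi> p) \<le> norm (ipk k \<xi> \<xi>)" by (rule Qp_mono[OF kaplansky])
  thus ?thesis by (simp add: cstar_id)
qed

lemma mpow_bound:
  fixes C :: "nat \<Rightarrow> nat \<Rightarrow> 'a::unital_cstar_algebra"
  assumes contr: "\<And>\<xi>. Qp (ipk k \<xi> \<xi> - ipk k (mvk k C \<xi>) (mvk k C \<xi>))"
    and "p < k" "j < k"
  shows "norm (mpow k C n p j) \<le> 1"
proof -
  define v where "v n = (\<lambda>p. mpow k C n p j)" for n
  have vs: "v (Suc n) = mvk k C (v n)" for n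
    unfolding v_def by (auto simp: mvk_def mmk_def)
  have "norm (ipk k (v n) (v n)) \<le> 1" for n
  proof (induction n)
    case 0
    have "ipk k (v 0) (v 0) = (\<Sum>p<k. if p = j then 1 else 0)"
      unfolding ipk_def v_def by (rule sum.cong) auto
    also have "\<dots> = 1" using assms(3) by simp
    finally show ?case by simp
  next
    case (Suc n)
    have "norm (ipk k (v (Suc n)) (v (Suc n))) \<le> norm (ipk k (v n) (v n))"
      unfolding vs by (rule Qp_mono[OF Qp_ipk contr])
    thus ?case using Suc by simp
  qed
  hence "norm (v n p) ^ 2 \<le> 1" using entry_le_ipk[OF assms(2), of "v n"] by (meson order_trans)
  hence "norm (v n p) \<le> 1" by (simp add: power_le_one_iff abs_le_iff power2_le_iff_abs_le)
  thus ?thesis unfolding v_def .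
qed



lemma mat_sqrt:
  fixes C :: "nat \<Rightarrow> nat \<Rightarrow> 'a::unital_cstar_algebra"
  assumes contr: "\<And>\<xi>. Qp (ipk k \<xi> \<xi> - ipk k (mvk k C \<xi>) (mvk k C \<xi>))"
    and Cs: "\<And>p q. p < k \<Longrightarrow> q < k \<Longrightarrow> adj (C p q) = C q p"
  shows "\<exists>S. (\<forall>p<k. \<forall>q<k. adj (S p q) = S q p) \<and>
             (\<forall>p<k. \<forall>q<k. mmk k S S p q = (if p = q then 1 else 0) - C p q)"
proof -
  define f where "f p q n = csq n *\<^sub>R mpow k C n p q" for p q n
  define S where "S p q = (\<Sum>n. f p q n)" for p q
  have sn: "summable (\<lambda>n. norm (f p q n))" if "p < k" "q < k" for p q
  proof (rule summable_comparison_test[OF _ summable_abs_csq])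
    show "\<exists>N. \<forall>n\<ge>N. norm (norm (f p q n)) \<le> \<bar>csq n\<bar>"
      using mpow_bound[OF contr that] by (auto simp: f_def mult_left_le)
  qed
  have s: "summable (f p q)" if "p < k" "q < k" for p q
    using summable_norm_cancel[OF sn[OF that]] .
  have "adj (S p q) = S q p" if "p < k" "q < k" for p q
  proof -
    have "adj (S p q) = (\<Sum>n. adj (f p q n))"
      unfolding S_def by (rule bounded_linear.suminf[OF bounded_linear_adj s[OF that]])
    also have "\<dots> = S q p" unfolding S_def f_def
      using mpow_sym[OF Cs that] by simp
    finally show ?thesis .
  qed
  moreover have "mmk k S S p q = (if p = q then 1 else 0) - C p q" if pq: "p < k" "q < k" for p q
  proof -
    define g where "g l N = (\<Sum>i\<le>N. f p l i * f l q (N - i))" for l N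
    have cp: "S p l * S l q = (\<Sum>N. g l N)" if "l < k" for l
      unfolding S_def g_def by (rule Cauchy_product[OF sn[OF pq(1) that] sn[OF that pq(2)]])
    have sg: "summable (g l)" if "l < k" for l
      unfolding g_def by (rule summable_Cauchy_product[OF sn[OF pq(1) that] sn[OF that pq(2)]])
    have "mmk k S S p q = (\<Sum>l<k. \<Sum>N. g l N)"
      unfolding mmk_def by (rule sum.cong) (auto simp: cp)
    also have "\<dots> = (\<Sum>N. \<Sum>l<k. g l N)"
      by (rule suminf_sum[symmetric]) (auto intro: sg)
    also have "\<dots> = (\<Sum>N. (\<Sum>i\<le>N. csq i * csq (N - i)) *\<^sub>R mpow k C N p q)"
    proof (rule suminf_cong)
      fix N
      have "(\<Sum>l<k. g l N) = (\<Sum>i\<le>N. (csq i * csq (N - i)) *\<^sub>R mmk k (mpow k C i) (mpow k C (N - i)) p q)"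
        unfolding g_def f_def mmk_def
        by (simp add: scaleR_sum_right sum.swap[of _ "{..<k}"] mult.assoc) (simp add: mult.commute)
      also have "\<dots> = (\<Sum>i\<le>N. (csq i * csq (N - i)) *\<^sub>R mpow k C N p q)"
        by (rule sum.cong) (auto simp: mpow_add[OF pq])
      also have "\<dots> = (\<Sum>i\<le>N. csq i * csq (N - i)) *\<^sub>R mpow k C N p q"
        by (simp add: scaleR_sum_left)
      finally show "(\<Sum>l<k. g l N) = (\<Sum>i\<le>N. csq i * csq (N - i)) *\<^sub>R mpow k C N p q" .
    qed
    also have "\<dots> = (\<Sum>N. if N = 0 then mpow k C 0 p q else if N = 1 then - mpow k C 1 p q else 0)"
      by (rule suminf_cong) (simp add: csq_conv)
    also have "\<dots> = (\<Sum>N\<in>{0::nat,1}. if N = 0 then mpow k C 0 p q else if N = 1 then - mpow k C 1 p q else 0)"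
      by (rule suminf_finite) auto
    also have "\<dots> = mpow k C 0 p q - mpow k C 1 p q" by simp
    also have "mpow k C 1 p q = C p q" using mmk_id_right[OF pq(2), of C p] by simp
    finally show ?thesis by simp
  qed
  ultimately show ?thesis by blast
qed



lemma of_nat_times_scaleR: "(of_nat n :: 'a::real_algebra_1) * x = real n *\<^sub>R x"
  by (simp add: scaleR_conv_of_real)

lemma sum_ineq:
  fixes z :: "'i \<Rightarrow> 'a::unital_cstar_algebra"
  assumes fin: "finite I"
  shows "Qp (real (card I) *\<^sub>R (\<Sum>x\<in>I. adj (z x) * z x) - adj (\<Sum>x\<in>I. z x) * (\<Sum>x\<in>I. z x))"
proof -
  define D where "D = (\<Sum>x\<in>I. \<Sum>x'\<in>I. adj (z x - z x') * (z x - z x'))"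
  have qD: "Qp D" unfolding D_def by (intro Qp_sum kaplansky)
  have "D = (\<Sum>x\<in>I. \<Sum>x'\<in>I. adj (z x) * z x + adj (z x') * z x' - adj (z x) * z x' - adj (z x') * z x)"
    unfolding D_def by (simp add: algebra_simps)
  also have "\<dots> = (\<Sum>x\<in>I. \<Sum>x'\<in>I. adj (z x) * z x) + (\<Sum>x\<in>I. \<Sum>x'\<in>I. adj (z x') * z x')
      - (\<Sum>x\<in>I. \<Sum>x'\<in>I. adj (z x) * z x') - (\<Sum>x\<in>I. \<Sum>x'\<in>I. adj (z x') * z x)"
    by (simp add: sum.distrib sum_subtractf)
  also have "(\<Sum>x\<in>I. \<Sum>x'\<in>I. adj (z x) * z x) = real (card I) *\<^sub>R (\<Sum>x\<in>I. adj (z x) * z x)"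
    by (simp add: scaleR_sum_right of_nat_times_scaleR)
  also have "(\<Sum>x\<in>I. \<Sum>x'\<in>I. adj (z x') * z x') = real (card I) *\<^sub>R (\<Sum>x\<in>I. adj (z x) * z x)"
    by (simp add: scaleR_sum_right of_nat_times_scaleR)
  also have "(\<Sum>x\<in>I. \<Sum>x'\<in>I. adj (z x) * z x') = adj (\<Sum>x\<in>I. z x) * (\<Sum>x\<in>I. z x)"
    by (simp add: sum_distrib_left sum_distrib_right) (subst sum.swap, rule refl)
  also have "(\<Sum>x\<in>I. \<Sum>x'\<in>I. adj (z x') * z x) = adj (\<Sum>x\<in>I. z x) * (\<Sum>x\<in>I. z x)"
    by (simp add: sum_distrib_left sum_distrib_right)
  finally have "D = (real (card I) *\<^sub>R (\<Sum>x\<in>I. adj (z x) * z x) - adj (\<Sum>x\<in>I. z x) * (\<Sum>x\<in>I. z x))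
     + (real (card I) *\<^sub>R (\<Sum>x\<in>I. adj (z x) * z x) - adj (\<Sum>x\<in>I. z x) * (\<Sum>x\<in>I. z x))"
    by (simp add: algebra_simps)
  hence "D = 2 *\<^sub>R (real (card I) *\<^sub>R (\<Sum>x\<in>I. adj (z x) * z x) - adj (\<Sum>x\<in>I. z x) * (\<Sum>x\<in>I. z x))"
    by (simp only: scaleR_2)
  hence "real (card I) *\<^sub>R (\<Sum>x\<in>I. adj (z x) * z x) - adj (\<Sum>x\<in>I. z x) * (\<Sum>x\<in>I. z x) = (1/2) *\<^sub>R D"
    by simp
  thus ?thesis using qD by (simp add: Qp_scale)
qed

lemma term_ineq:
  fixes a e :: "'a::unital_cstar_algebra"
  assumes "norm a \<le> K"
  shows "Qp ((K ^ 2) *\<^sub>R (adj e * e) - adj (a * e) * (a * e))"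
proof -
  have "Qp (of_real (norm (adj a * a)) - adj a * a)" by (rule Qp_norm_minus) simp
  moreover have "Qp (of_real (K ^ 2 - norm (adj a * a)) :: 'a)"
  proof (rule Qp_of_real)
    have "norm (adj a * a) = norm a ^ 2" by (rule cstar_id)
    also have "\<dots> \<le> K ^ 2" using assms by (simp add: power_mono)
    finally show "0 \<le> K ^ 2 - norm (adj a * a)" by simp
  qed
  ultimately have "Qp (of_real (K ^ 2) - adj a * a)"
    using Qp_add by (fastforce simp: of_real_diff)
  hence "Qp (adj e * (of_real (K ^ 2) - adj a * a) * e)" by (rule Qp_conj)
  moreover have "adj e * (of_real (K ^ 2) - adj a * a) * e = (K ^ 2) *\<^sub>R (adj e * e) - adj (a * e) * (a * e)"
    by (simp add: algebra_simps of_real_def)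
  ultimately show ?thesis by simp
qed

lemma mat_ineq:
  fixes a :: "nat \<Rightarrow> 'i \<Rightarrow> 'a::unital_cstar_algebra" and \<eta> :: "'i \<Rightarrow> 'a"
  assumes fin: "finite I" and bd: "\<And>p x. p < k \<Longrightarrow> x \<in> I \<Longrightarrow> norm (a p x) \<le> K"
  shows "Qp ((real k * real (card I) * K ^ 2) *\<^sub>R (\<Sum>x\<in>I. adj (\<eta> x) * \<eta> x)
           - ipk k (\<lambda>p. \<Sum>x\<in>I. a p x * \<eta> x) (\<lambda>p. \<Sum>x\<in>I. a p x * \<eta> x))"
proof -
  define G where "G = (\<Sum>x\<in>I. adj (\<eta> x) * \<eta> x)"
  define D where "D p = real (card I) *\<^sub>R (\<Sum>x\<in>I. (K ^ 2) *\<^sub>R (adj (\<eta> x) * \<eta> x) - adj (a p x * \<eta> x) * (a p x * \<eta> x))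
      + (real (card I) *\<^sub>R (\<Sum>x\<in>I. adj (a p x * \<eta> x) * (a p x * \<eta> x))
         - adj (\<Sum>x\<in>I. a p x * \<eta> x) * (\<Sum>x\<in>I. a p x * \<eta> x))" for p
  have "Qp (D p)" if "p < k" for p
  proof -
    have "Qp (\<Sum>x\<in>I. (K ^ 2) *\<^sub>R (adj (\<eta> x) * \<eta> x) - adj (a p x * \<eta> x) * (a p x * \<eta> x))"
      by (rule Qp_sum) (rule term_ineq, rule bd[OF that], assumption)
    hence A: "Qp (real (card I) *\<^sub>R (\<Sum>x\<in>I. (K ^ 2) *\<^sub>R (adj (\<eta> x) * \<eta> x) - adj (a p x * \<eta> x) * (a p x * \<eta> x)))"
      by (rule Qp_scale[rotated]) simp
    have B: "Qp (real (card I) *\<^sub>R (\<Sum>x\<in>I. adj (a p x * \<eta> x) * (a p x * \<eta> x))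
         - adj (\<Sum>x\<in>I. a p x * \<eta> x) * (\<Sum>x\<in>I. a p x * \<eta> x))"
      by (rule sum_ineq[OF fin])
    show ?thesis unfolding D_def by (rule Qp_add[OF A B])
  qed
  hence "Qp (\<Sum>p<k. D p)" by (intro Qp_sum) auto
  moreover have "(\<Sum>p<k. D p) = (real k * real (card I) * K ^ 2) *\<^sub>R G
           - ipk k (\<lambda>p. \<Sum>x\<in>I. a p x * \<eta> x) (\<lambda>p. \<Sum>x\<in>I. a p x * \<eta> x)"
  proof -
    have Dp: "D p = (real (card I) * K ^ 2) *\<^sub>R G - adj (\<Sum>x\<in>I. a p x * \<eta> x) * (\<Sum>x\<in>I. a p x * \<eta> x)" for p
    proof -
      have "(\<Sum>x\<in>I. (K ^ 2) *\<^sub>R (adj (\<eta> x) * \<eta> x) - adj (a p x * \<eta> x) * (a p x * \<eta> x))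
          = (K ^ 2) *\<^sub>R G - (\<Sum>x\<in>I. adj (a p x * \<eta> x) * (a p x * \<eta> x))"
        unfolding G_def by (simp only: sum_subtractf scaleR_sum_right)
      moreover have "r *\<^sub>R (s *\<^sub>R g - w) + (r *\<^sub>R w - zz) = (r * s) *\<^sub>R g - zz" for r s :: real and g w zz :: 'a
        by (simp add: algebra_simps)
      ultimately show ?thesis unfolding D_def by simp
    qed
    have "(\<Sum>p<k. D p) = (\<Sum>p<k. (real (card I) * K ^ 2) *\<^sub>R G)
        - (\<Sum>p<k. adj (\<Sum>x\<in>I. a p x * \<eta> x) * (\<Sum>x\<in>I. a p x * \<eta> x))"
      by (simp only: Dp sum_subtractf)
    also have "(\<Sum>p<k. (real (card I) * K ^ 2) *\<^sub>R G) = (real k * real (card I) * K ^ 2) *\<^sub>R G"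
      by (simp only: sum_constant_scaleR card_lessThan scaleR_scaleR) (simp add: mult.assoc)
    finally show ?thesis unfolding ipk_def by simp
  qed
  ultimately show ?thesis unfolding G_def by simp
qed



lemma ipk_adj: "adj (ipk k \<xi> \<eta>) = ipk k \<eta> (\<xi> :: nat \<Rightarrow> 'a::cstar_algebra)"
  unfolding ipk_def by simp

lemma ipk_cong: "(\<And>p. p < k \<Longrightarrow> \<xi> p = \<xi>' p) \<Longrightarrow> (\<And>p. p < k \<Longrightarrow> \<eta> p = \<eta>' p) \<Longrightarrow> ipk k \<xi> \<eta> = ipk k \<xi>' \<eta>'"
  unfolding ipk_def by (rule sum.cong) auto

lemma ipk_expand:
  fixes \<xi> \<zeta> :: "nat \<Rightarrow> 'a::unital_cstar_algebra"
  shows "ipk k (\<lambda>p. \<xi> p - s *\<^sub>R \<zeta> p) (\<lambda>p. \<xi> p - s *\<^sub>R \<zeta> p)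
     = ipk k \<xi> \<xi> - s *\<^sub>R ipk k \<xi> \<zeta> - s *\<^sub>R ipk k \<zeta> \<xi> + (s * s) *\<^sub>R ipk k \<zeta> \<zeta>"
proof -
  have "ipk k (\<lambda>p. \<xi> p - s *\<^sub>R \<zeta> p) (\<lambda>p. \<xi> p - s *\<^sub>R \<zeta> p)
      = (\<Sum>p<k. adj (\<xi> p) * \<xi> p - s *\<^sub>R (adj (\<xi> p) * \<zeta> p) - s *\<^sub>R (adj (\<zeta> p) * \<xi> p) + (s * s) *\<^sub>R (adj (\<zeta> p) * \<zeta> p))"
    unfolding ipk_def by (rule sum.cong) (auto simp: algebra_simps)
  also have "\<dots> = ipk k \<xi> \<xi> - s *\<^sub>R ipk k \<xi> \<zeta> - s *\<^sub>R ipk k \<zeta> \<xi> + (s * s) *\<^sub>R ipk k \<zeta> \<zeta>"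
    unfolding ipk_def by (simp only: sum.distrib sum_subtractf scaleR_sum_right)
  finally show ?thesis .
qed

lemma swap3: "(\<Sum>p\<in>A. \<Sum>x\<in>B. \<Sum>q\<in>A. f p x q) = (\<Sum>x\<in>B. \<Sum>q\<in>A. \<Sum>p\<in>A. (f p x q :: 'a::comm_monoid_add))"
  by (subst sum.swap) (rule sum.cong[OF refl], rule sum.swap)

lemma gram_pos:
  fixes y :: "'i \<Rightarrow> nat \<Rightarrow> 'a::unital_cstar_algebra"
  assumes fin: "finite I"
  shows "\<exists>B. \<forall>p<k. \<forall>q<k. (\<Sum>x\<in>I. adj (y x p) * y x q) = (\<Sum>l<k. adj (B l p) * B l q)"
proof -
  define P where "P p q = (\<Sum>x\<in>I. adj (y x p) * y x q)" for p q
  define K where "K = (\<Sum>x\<in>I. \<Sum>p<k. norm (y x p))"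
  have Kb: "norm (adj (y x p)) \<le> K" if "p < k" "x \<in> I" for p x
  proof -
    have "norm (y x p) \<le> (\<Sum>p'<k. norm (y x p'))" by (rule member_le_sum) (use that in auto)
    also have "\<dots> \<le> K" unfolding K_def
      by (rule member_le_sum[of x I "\<lambda>x. \<Sum>p<k. norm (y x p)"]) (use that fin in \<open>auto intro: sum_nonneg\<close>)
    finally show ?thesis by simp
  qed
  define c where "c = real k * real (card I) * K ^ 2"
  have c0: "c \<ge> 0" unfolding c_def by simp
  define t where "t = c / 2 + 1"
  have tp: "t > 0" unfolding t_def using c0 by simp
  define s where "s = 1 / t"
  define C where "C p q = (if p = q then 1 else 0) - s *\<^sub>R P p q" for p q
  have Cs: "adj (C p q) = C q p" for p q
    unfolding C_def P_def by simp
  have contr: "Qp (ipk k \<xi> \<xi> - ipk k (mvk k C \<xi>) (mvk k C \<xi>))" for \<xi>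
  proof -
    define \<eta> where "\<eta> x = (\<Sum>q<k. y x q * \<xi> q)" for x
    define G where "G = (\<Sum>x\<in>I. adj (\<eta> x) * \<eta> x)"
    define \<zeta> where "\<zeta> p = (\<Sum>x\<in>I. adj (y x p) * \<eta> x)" for p
    have sG: "adj G = G" unfolding G_def by simp
    have z1: "mvk k P \<xi> p = \<zeta> p" for p
      unfolding mvk_def P_def \<zeta>_def \<eta>_def
      by (simp add: sum_distrib_left sum_distrib_right mult.assoc) (subst sum.swap, rule refl)
    have C1: "mvk k C \<xi> p = \<xi> p - s *\<^sub>R \<zeta> p" if "p < k" for p
    proof -
      have "mvk k C \<xi> p = (\<Sum>q<k. (if p = q then 1 else 0) * \<xi> q) - s *\<^sub>R mvk k P \<xi> p"
        unfolding mvk_def C_def by (simp add: left_diff_distrib sum_subtractf scaleR_sum_right)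
      also have "(\<Sum>q<k. (if p = q then 1 else 0) * \<xi> q) = (\<Sum>q<k. if q = p then \<xi> p else 0)"
        by (rule sum.cong) auto
      also have "\<dots> = \<xi> p" using that by simp
      finally show ?thesis using z1 by simp
    qed
    have i1: "ipk k \<xi> \<zeta> = G"
      unfolding ipk_def \<zeta>_def G_def \<eta>_def
      by (simp add: sum_distrib_left sum_distrib_right mult.assoc) (rule swap3)
    have i2: "ipk k \<zeta> \<xi> = G" using arg_cong[OF i1, of adj] sG by (simp add: ipk_adj)
    have ineq: "Qp (c *\<^sub>R G - ipk k \<zeta> \<zeta>)"
      unfolding c_def G_def \<zeta>_def
      by (rule mat_ineq[OF fin, of k "\<lambda>p x. adj (y x p)" K \<eta>]) (rule Kb)
    have qG: "Qp G" unfolding G_def by (intro Qp_sum kaplansky)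
    have "ipk k (mvk k C \<xi>) (mvk k C \<xi>) = ipk k (\<lambda>p. \<xi> p - s *\<^sub>R \<zeta> p) (\<lambda>p. \<xi> p - s *\<^sub>R \<zeta> p)"
      by (rule ipk_cong) (simp_all add: C1)
    also have "\<dots> = ipk k \<xi> \<xi> - s *\<^sub>R G - s *\<^sub>R G + (s * s) *\<^sub>R ipk k \<zeta> \<zeta>"
      by (simp only: ipk_expand i1 i2)
    finally have W: "ipk k (mvk k C \<xi>) (mvk k C \<xi>) = ipk k \<xi> \<xi> - s *\<^sub>R G - s *\<^sub>R G + (s * s) *\<^sub>R ipk k \<zeta> \<zeta>" .
    have e: "ipk k \<xi> \<xi> - ipk k (mvk k C \<xi>) (mvk k C \<xi>) = (s + s) *\<^sub>R G - (s * s) *\<^sub>R ipk k \<zeta> \<zeta>"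
      by (simp only: W scaleR_left_distrib) (simp add: algebra_simps)
    have r: "s * s * (2 * t - c) + s * s * c = s + s" unfolding s_def using tp by (simp add: field_simps)
    have "(s * s) *\<^sub>R ((2 * t - c) *\<^sub>R G + (c *\<^sub>R G - ipk k \<zeta> \<zeta>))
        = (s * s * (2 * t - c) + s * s * c) *\<^sub>R G - (s * s) *\<^sub>R ipk k \<zeta> \<zeta>"
      by (simp add: algebra_simps)
    also have "\<dots> = (s + s) *\<^sub>R G - (s * s) *\<^sub>R ipk k \<zeta> \<zeta>" by (simp only: r)
    finally have e2: "ipk k \<xi> \<xi> - ipk k (mvk k C \<xi>) (mvk k C \<xi>) = (s * s) *\<^sub>R ((2 * t - c) *\<^sub>R G + (c *\<^sub>R G - ipk k \<zeta> \<zeta>))"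
      using e by simp
    have "Qp ((2 * t - c) *\<^sub>R G)" using qG unfolding t_def by (intro Qp_scale) auto
    have "Qp ((s * s) *\<^sub>R ((2 * t - c) *\<^sub>R G + (c *\<^sub>R G - ipk k \<zeta> \<zeta>)))"
      by (rule Qp_scale[OF _ Qp_add[OF \<open>Qp ((2 * t - c) *\<^sub>R G)\<close> ineq]]) simp
    thus ?thesis using e2 by simp
  qed
  obtain S where S: "\<forall>p<k. \<forall>q<k. adj (S p q) = S q p"
    "\<forall>p<k. \<forall>q<k. mmk k S S p q = (if p = q then 1 else 0) - C p q"
    using mat_sqrt[OF contr Cs] by blast
  define B where "B l p = sqrt t *\<^sub>R S l p" for l p
  have "(\<Sum>l<k. adj (B l p) * B l q) = P p q" if "p < k" "q < k" for p q
  proof -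
    have "(\<Sum>l<k. adj (B l p) * B l q) = (\<Sum>l<k. t *\<^sub>R (S p l * S l q))"
      unfolding B_def by (rule sum.cong) (use S(1) that tp in auto)
    also have "\<dots> = t *\<^sub>R mmk k S S p q" unfolding mmk_def by (simp add: scaleR_sum_right)
    also have "\<dots> = t *\<^sub>R (s *\<^sub>R P p q)" using S(2) that unfolding C_def by simp
    also have "\<dots> = P p q" unfolding s_def using tp by simp
    finally show ?thesis .
  qed
  thus ?thesis unfolding P_def by metis
qed



lemma sum_split_add: fixes f :: "nat \<Rightarrow> 'b::comm_monoid_add" shows "(\<Sum>m<a + b. f m) = (\<Sum>m<a. f m) + (\<Sum>j<b. f (a + j))"
proof (induction b)
  case (Suc b) thus ?case by (simp add: add.assoc)
qed simp

lemma sum_blocks: fixes f :: "nat \<Rightarrow> 'b::comm_monoid_add" shows "(\<Sum>m<k * N. f m) = (\<Sum>l<k. \<Sum>j<N. f (l * N + j))"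
proof (induction k)
  case (Suc k)
  have "(\<Sum>m<Suc k * N. f m) = (\<Sum>m<k * N + N. f m)" by (simp add: add.commute)
  also have "\<dots> = (\<Sum>m<k * N. f m) + (\<Sum>j<N. f (k * N + j))" by (rule sum_split_add)
  finally show ?case using Suc by simp
qed simp

definition Emat :: "'n \<Rightarrow> 'n \<Rightarrow> 'a::zero \<Rightarrow> 'a^'n^'n" where
  "Emat i j a = (\<chi> r c. if r = i \<and> c = j then a else 0)"

lemma Emat_comp: "Emat i j a $ r $ c = (if r = i \<and> c = j then a else 0)"
  by (simp add: Emat_def)

lemma Emat_add: "Emat i j (a + b) = Emat i j a + Emat i j (b::'a::monoid_add)"
  by (simp add: vec_eq_iff Emat_comp)

lemma Emat_zero[simp]: "Emat i j 0 = 0"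
  by (simp add: vec_eq_iff Emat_comp)

lemma Emat_sum: "finite A \<Longrightarrow> Emat i j (sum f A) = (\<Sum>x\<in>A. Emat i j (f x :: 'a::comm_monoid_add))"
  by (induction A rule: finite_induct) (simp_all add: Emat_add)

lemma madj_Emat: "madj (Emat i j x) = Emat j i (adj (x::'a::cstar_algebra))"
  by (simp add: vec_eq_iff Emat_comp madj_def)

lemma madj_zero[simp]: "madj (0 :: 'a::cstar_algebra^'n^'n) = 0"
  by (simp add: vec_eq_iff madj_def)

lemma Emat_mult: "Emat i l x ** Emat l j y = Emat i j (x * (y::'a::semiring_1))"
proof -
  have "(Emat i l x ** Emat l j y) $ r $ c = Emat i j (x * y) $ r $ c" for r c
  proof -
    have "(Emat i l x ** Emat l j y) $ r $ c = (\<Sum>m\<in>UNIV. (if r = i \<and> m = l then x else 0) * (if m = l \<and> c = j then y else 0))"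
      by (simp add: matrix_matrix_mult_def Emat_comp)
    also have "\<dots> = (\<Sum>m\<in>UNIV. if m = l then (if r = i \<and> c = j then x * y else 0) else 0)"
      by (rule sum.cong) auto
    also have "\<dots> = Emat i j (x * y) $ r $ c" by (simp add: Emat_comp)
    finally show ?thesis .
  qed
  thus ?thesis by (simp add: vec_eq_iff)
qed

lemma additive_zero: fixes f :: "'a::monoid_add \<Rightarrow> 'b::ab_group_add" shows "(\<forall>x y. f (x + y) = f x + f y) \<Longrightarrow> f 0 = 0"
proof -
  assume h: "\<forall>x y. f (x + y) = f x + f y"
  have "f 0 = f 0 + f 0" using h[rule_format, of 0 0] by (simp only: add_0_left)
  thus ?thesis by simp
qed

lemma additive_sum: fixes f :: "'a::comm_monoid_add \<Rightarrow> 'b::ab_group_add" shows "(\<forall>x y. f (x + y) = f x + f y) \<Longrightarrow> f (sum g A) = (\<Sum>x\<in>A. f (g x))"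
proof (induction A rule: infinite_finite_induct)
  case (infinite A) thus ?case using additive_zero[of f] by simp
next
  case empty thus ?case using additive_zero[of f] by simp
next
  case (insert x F) thus ?case by simp
qed

lemma hat_Emat:
  fixes \<phi> :: "'a::zero \<Rightarrow> 'u::comm_monoid_add^'n::finite^'n"
  assumes "\<phi> 0 = 0"
  shows "hat \<phi> (Emat i j a) = \<phi> a $ i $ j"
proof -
  have inner: "\<phi> (Emat i j a $ r $ c) $ r $ c = (if r = i then (if c = j then \<phi> a $ i $ j else 0) else 0)" for r c
    by (auto simp: Emat_comp assms)
  have "hat \<phi> (Emat i j a) = (\<Sum>r\<in>UNIV. \<Sum>c\<in>UNIV. if r = i then (if c = j then \<phi> a $ i $ j else 0) else 0)"
    unfolding hat_def by (simp only: inner)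
  also have "\<dots> = (\<Sum>r\<in>UNIV. if r = i then (\<Sum>c\<in>UNIV. if c = j then \<phi> a $ i $ j else 0) else 0)"
    by (rule sum.cong) auto
  also have "\<dots> = \<phi> a $ i $ j" by simp
  finally show ?thesis .
qed

text \<open>Indexing of k*N by pairs.\<close>

lemma index_ex:
  "\<exists>(e :: nat \<Rightarrow> 'n::finite) ei. (\<forall>r. ei r < CARD('n)) \<and> (\<forall>r. e (ei r) = r) \<and> (\<forall>j. j < CARD('n) \<longrightarrow> ei (e j) = j)"
proof -
  obtain e :: "nat \<Rightarrow> 'n" where b: "bij_betw e {0..<CARD('n)} UNIV"
    using ex_bij_betw_nat_finite[of "UNIV :: 'n set"] by auto
  define ei where "ei = inv_into {0..<CARD('n)} e"
  have "ei r < CARD('n)" for r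
    unfolding ei_def using b by (metis atLeastLessThan_iff bij_betw_def inv_into_into UNIV_I)
  moreover have "e (ei r) = r" for r
    unfolding ei_def using b by (meson bij_betw_inv_into_right UNIV_I)
  moreover have "ei (e j) = j" if "j < CARD('n)" for j
    unfolding ei_def using b that by (simp add: bij_betw_inv_into_left)
  ultimately show ?thesis by blast
qed

lemma sum_reindex_e:
  assumes "\<And>r. ei r < N" "\<And>r. e (ei r) = (r::'n::finite)" "\<And>j. j < N \<Longrightarrow> ei (e j) = j"
  shows "(\<Sum>j<N. f j) = (\<Sum>r\<in>UNIV. f (ei r) :: 'b::comm_monoid_add)"
proof -
  have "bij_betw ei UNIV {..<N}"
    by (rule bij_betwI[where g=e]) (use assms in auto)
  thus ?thesis by (simp add: sum.reindex_bij_betw)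
qed



lemma madj_mult_comp: "(madj X ** Y) $ i $ j = (\<Sum>r\<in>UNIV. adj (X $ r $ i) * Y $ r $ j)"
  for X Y :: "'a::unital_cstar_algebra^'n::finite^'n"
  by (simp add: matrix_matrix_mult_def madj_def)

lemma idx_facts:
  assumes N: "N > 0" and ei: "\<And>r. ei r < N" and e: "\<And>r. e (ei r) = r"
  shows "(l * N + ei r) div N = l" "e ((l * N + ei r) mod N) = r"
    "l < k \<Longrightarrow> l * N + ei r < k * (N::nat)"
proof -
  show "(l * N + ei r) div N = l" using N ei[of r] by simp
  show "e ((l * N + ei r) mod N) = r" using N ei[of r] e by simp
  assume "l < k"
  hence "Suc l \<le> k" by simp
  hence "Suc l * N \<le> k * N" by (rule mult_right_mono) simp
  thus "l * N + ei r < k * N" using ei[of r] by simp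
qed

lemma sum_idx:
  fixes f :: "nat \<Rightarrow> 'b::comm_monoid_add"
  assumes ei: "\<And>r. ei r < N" and e: "\<And>r. e (ei r) = (r::'n::finite)" and ee: "\<And>j. j < N \<Longrightarrow> ei (e j) = j"
  shows "(\<Sum>m<k * N. f m) = (\<Sum>l<k. \<Sum>r\<in>UNIV. f (l * N + ei r))"
proof -
  have "(\<Sum>m<k * N. f m) = (\<Sum>l<k. \<Sum>j<N. f (l * N + j))" by (rule sum_blocks)
  also have "\<dots> = (\<Sum>l<k. \<Sum>r\<in>UNIV. f (l * N + ei r))"
    by (rule sum.cong[OF refl], rule sum_reindex_e[OF ei e ee])
  finally show ?thesis .
qed

lemma sum_times_set: "(\<Sum>x\<in>A \<times> B. f x) = (\<Sum>a\<in>A. \<Sum>b\<in>B. f (a, b))"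
  by (simp add: sum.cartesian_product)

lemma swap4:
  "(\<Sum>i\<in>A. \<Sum>j\<in>B. \<Sum>m\<in>C. \<Sum>r\<in>D. f i j m r) = (\<Sum>m\<in>C. \<Sum>r\<in>D. \<Sum>i\<in>A. \<Sum>j\<in>B. (f i j m r :: 'b::comm_monoid_add))"
proof -
  have "(\<Sum>i\<in>A. \<Sum>j\<in>B. \<Sum>m\<in>C. \<Sum>r\<in>D. f i j m r) = (\<Sum>i\<in>A. \<Sum>m\<in>C. \<Sum>j\<in>B. \<Sum>r\<in>D. f i j m r)"
    by (rule sum.cong[OF refl], rule sum.swap)
  also have "\<dots> = (\<Sum>m\<in>C. \<Sum>i\<in>A. \<Sum>j\<in>B. \<Sum>r\<in>D. f i j m r)" by (rule sum.swap)
  also have "\<dots> = (\<Sum>m\<in>C. \<Sum>i\<in>A. \<Sum>r\<in>D. \<Sum>j\<in>B. f i j m r)"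
    by (rule sum.cong[OF refl], rule sum.cong[OF refl], rule sum.swap)
  also have "\<dots> = (\<Sum>m\<in>C. \<Sum>r\<in>D. \<Sum>i\<in>A. \<Sum>j\<in>B. f i j m r)"
    by (rule sum.cong[OF refl], rule sum.swap)
  finally show ?thesis .
qed

lemma partB:
  fixes \<phi> :: "'a::unital_cstar_algebra \<Rightarrow> 'u::unital_cstar_algebra^'n::finite^'n"
  assumes cp: "completely_positive (*) adj (**) madj \<phi>"
  shows "completely_positive (**) madj (*) adj (hat \<phi>)"
  unfolding completely_positive_def
proof (intro allI impI)
  fix k and M :: "nat \<Rightarrow> nat \<Rightarrow> 'a^'n^'n"
  assume "mat_pos (**) madj k M"
  then obtain B where B: "\<forall>i<k. \<forall>j<k. M i j = (\<Sum>l<k. madj (B l i) ** B l j)"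
    unfolding mat_pos_def by blast
  obtain e :: "nat \<Rightarrow> 'n" and ei where ei: "\<And>r. ei r < CARD('n)" and e: "\<And>r. e (ei r) = r"
    and ee: "\<And>j. j < CARD('n) \<Longrightarrow> ei (e j) = j"
    using index_ex[where 'n='n] by blast
  define N where "N = CARD('n)"
  have N0: "N > 0" unfolding N_def by simp
  note ei' = ei[folded N_def] and ee' = ee[folded N_def]
  note idx = idx_facts[OF N0 ei' e]
  have dm: "(l * N + ei r) div N = l" "(l * N + ei r) mod N = ei r" "ei r mod N = ei r" for l r
    using N0 ei'[of r] by simp_all
  define pp where "pp s = s div N" for s
  define ii where "ii s = e (s mod N)" for s
  have ppk: "s < k * N \<Longrightarrow> pp s < k" for s unfolding pp_def
    by (simp add: less_mult_imp_div_less)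
  define M' where "M' s s' = M (pp s) (pp s') $ ii s $ ii s'" for s s'
  define B' where "B' m s = B (pp m) (pp s) $ ii m $ ii s" for m s
  have B'e: "B' (l * N + ei r) s = B l (pp s) $ r $ ii s" for l r s
    unfolding B'_def by (simp add: pp_def ii_def dm e)
  have "mat_pos (*) adj (k * N) M'"
    unfolding mat_pos_def
  proof (intro exI[where x=B'] allI impI)
    fix s s' assume s: "s < k * N" and s': "s' < k * N"
    have "M' s s' = (\<Sum>l<k. (madj (B l (pp s)) ** B l (pp s')) $ ii s $ ii s')"
      unfolding M'_def using B ppk[OF s] ppk[OF s'] by simp
    also have "\<dots> = (\<Sum>l<k. \<Sum>r\<in>UNIV. adj (B l (pp s) $ r $ ii s) * B l (pp s') $ r $ ii s')"
      by (simp add: madj_mult_comp)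
    also have "\<dots> = (\<Sum>l<k. \<Sum>r\<in>UNIV. adj (B' (l * N + ei r) s) * B' (l * N + ei r) s')"
      by (simp only: B'e)
    also have "\<dots> = (\<Sum>m<k * N. adj (B' m s) * B' m s')"
      by (rule sum_idx[OF ei' e ee', symmetric])
    finally show "M' s s' = (\<Sum>m<k * N. adj (B' m s) * B' m s')" .
  qed
  with cp obtain D where D: "\<forall>s<k * N. \<forall>s'<k * N. \<phi> (M' s s') = (\<Sum>m<k * N. madj (D m s) ** D m s')"
    unfolding completely_positive_def mat_pos_def by blast
  define Y where "Y x p = (\<Sum>i\<in>UNIV. D (fst x) (p * N + ei i) $ snd x $ i)" for x :: "nat \<times> 'n" and p
  have hY: "hat \<phi> (M p q) = (\<Sum>x\<in>{..<k * N} \<times> UNIV. adj (Y x p) * Y x q)" if pq: "p < k" "q < k" for p q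
  proof -
    have "hat \<phi> (M p q) = (\<Sum>i\<in>UNIV. \<Sum>j\<in>UNIV. \<phi> (M' (p * N + ei i) (q * N + ei j)) $ i $ j)"
      unfolding hat_def M'_def pp_def ii_def using idx by simp
    also have "\<dots> = (\<Sum>i\<in>UNIV. \<Sum>j\<in>UNIV. \<Sum>m<k * N. \<Sum>r\<in>UNIV.
        adj (D m (p * N + ei i) $ r $ i) * D m (q * N + ei j) $ r $ j)"
      using D idx(3)[OF pq(1)] idx(3)[OF pq(2)] by (simp add: madj_mult_comp)
    also have "\<dots> = (\<Sum>m<k * N. \<Sum>r\<in>UNIV. \<Sum>i\<in>UNIV. \<Sum>j\<in>UNIV.
        adj (D m (p * N + ei i) $ r $ i) * D m (q * N + ei j) $ r $ j)"
      by (rule swap4)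
    also have "\<dots> = (\<Sum>x\<in>{..<k * N} \<times> UNIV. adj (Y x p) * Y x q)"
      unfolding sum_times_set Y_def
      by (simp add: sum_product)
    finally show ?thesis .
  qed
  obtain B'' where B'': "\<forall>p<k. \<forall>q<k. (\<Sum>x\<in>{..<k * N} \<times> (UNIV :: 'n set). adj (Y x p) * Y x q)
      = (\<Sum>l<k. adj (B'' l p) * B'' l q)"
    using gram_pos[of "{..<k * N} \<times> (UNIV :: 'n set)" k Y] by auto
  show "mat_pos (*) adj k (\<lambda>i j. hat \<phi> (M i j))"
    unfolding mat_pos_def using hY B'' by (intro exI[where x=B'']) auto
qed



lemma partA:
  fixes \<phi> :: "'a::unital_cstar_algebra \<Rightarrow> 'u::unital_cstar_algebra^'n::finite^'n"
  assumes add: "\<forall>x y. \<phi> (x + y) = \<phi> x + \<phi> y"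
    and cp: "completely_positive (**) madj (*) adj (hat \<phi>)"
  shows "completely_positive (*) adj (**) madj \<phi>"
  unfolding completely_positive_def
proof (intro allI impI)
  fix k and M :: "nat \<Rightarrow> nat \<Rightarrow> 'a"
  assume "mat_pos (*) adj k M"
  then obtain b where b: "\<forall>i<k. \<forall>j<k. M i j = (\<Sum>l<k. adj (b l i) * b l j)"
    unfolding mat_pos_def by blast
  have phi0: "\<phi> 0 = 0" using additive_zero[OF add] .
  obtain e :: "nat \<Rightarrow> 'n" and ei where ei: "\<And>r. ei r < CARD('n)" and e: "\<And>r. e (ei r) = r"
    and ee: "\<And>j. j < CARD('n) \<Longrightarrow> ei (e j) = j"
    using index_ex[where 'n='n] by blast
  define N where "N = CARD('n)"
  have N0: "N > 0" unfolding N_def by simp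
  note ei' = ei[folded N_def] and ee' = ee[folded N_def]
  note idx = idx_facts[OF N0 ei' e]
  have dm: "(l * N + ei r) div N = l" "(l * N + ei r) mod N = ei r" "ei r mod N = ei r" for l r
    using N0 ei'[of r] by simp_all
  define pp where "pp s = s div N" for s
  define ii where "ii s = e (s mod N)" for s
  have ppk: "s < k * N \<Longrightarrow> pp s < k" for s unfolding pp_def
    by (simp add: less_mult_imp_div_less)
  have pe: "pp (l * N + ei r) = l" "ii (l * N + ei r) = r" for l r
    unfolding pp_def ii_def by (simp_all add: dm e)
  define i0 where "i0 = e 0"
  define M' where "M' s s' = Emat (ii s) (ii s') (M (pp s) (pp s'))" for s s'
  define B' where "B' m s = (if m < k then Emat i0 (ii s) (b m (pp s)) else 0)" for m s
  have kkN: "k \<le> k * N" using N0 by simp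
  have "mat_pos (**) madj (k * N) M'"
    unfolding mat_pos_def
  proof (intro exI[where x=B'] allI impI)
    fix s s' assume s: "s < k * N" and s': "s' < k * N"
    have "(\<Sum>m<k * N. madj (B' m s) ** B' m s') = (\<Sum>m<k. madj (B' m s) ** B' m s')"
      by (rule sum.mono_neutral_right) (use kkN in \<open>auto simp: B'_def\<close>)
    also have "\<dots> = (\<Sum>m<k. Emat (ii s) (ii s') (adj (b m (pp s)) * b m (pp s')))"
      by (rule sum.cong) (auto simp: B'_def madj_Emat Emat_mult)
    also have "\<dots> = Emat (ii s) (ii s') (M (pp s) (pp s'))"
      using b ppk[OF s] ppk[OF s'] by (simp add: Emat_sum)
    finally show "M' s s' = (\<Sum>m<k * N. madj (B' m s) ** B' m s')" unfolding M'_def by simp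
  qed
  with cp obtain D where D: "\<forall>s<k * N. \<forall>s'<k * N. hat \<phi> (M' s s') = (\<Sum>m<k * N. adj (D m s) * D m s')"
    unfolding completely_positive_def mat_pos_def by blast
  define B'' where "B'' l p = (\<chi> r i. D (l * N + ei r) (p * N + ei i))" for l p
  have "\<phi> (M p q) = (\<Sum>l<k. madj (B'' l p) ** B'' l q)" if pq: "p < k" "q < k" for p q
  proof -
    have "\<phi> (M p q) $ i $ j = (\<Sum>l<k. madj (B'' l p) ** B'' l q) $ i $ j" for i j
    proof -
      have si: "p * N + ei i < k * N" "q * N + ei j < k * N" using idx(3) pq by auto
      have "\<phi> (M p q) $ i $ j = hat \<phi> (M' (p * N + ei i) (q * N + ei j))"
        unfolding M'_def pe by (simp add: hat_Emat phi0)
      also have "\<dots> = (\<Sum>m<k * N. adj (D m (p * N + ei i)) * D m (q * N + ei j))"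
        using D si by simp
      also have "\<dots> = (\<Sum>l<k. \<Sum>r\<in>UNIV. adj (D (l * N + ei r) (p * N + ei i)) * D (l * N + ei r) (q * N + ei j))"
        by (rule sum_idx[OF ei' e ee'])
      also have "\<dots> = (\<Sum>l<k. madj (B'' l p) ** B'' l q) $ i $ j"
        by (simp add: madj_mult_comp B''_def)
      finally show ?thesis .
    qed
    thus ?thesis by (simp add: vec_eq_iff)
  qed
  thus "mat_pos (**) madj k (\<lambda>i j. \<phi> (M i j))"
    unfolding mat_pos_def by (intro exI[where x=B'']) auto
qed



lemma scC_sum: "scC c (sum f A) = (\<Sum>x\<in>A. scC c (f x) :: 'a::cstar_algebra)"
  by (induction A rule: infinite_finite_induct) (simp_all add: scC_add_right)

lemma sum_Emat_self: "(\<Sum>i\<in>UNIV. \<Sum>j\<in>UNIV. Emat i j (X $ i $ j)) = (X :: 'a::comm_monoid_add^'n::finite^'n)"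
proof -
  have "(\<Sum>i\<in>UNIV. \<Sum>j\<in>UNIV. Emat i j (X $ i $ j)) $ r $ c = X $ r $ c" for r c
  proof -
    have "(\<Sum>i\<in>UNIV. \<Sum>j\<in>UNIV. Emat i j (X $ i $ j)) $ r $ c
        = (\<Sum>i\<in>UNIV. \<Sum>j\<in>UNIV. if r = i \<and> c = j then X $ i $ j else 0)"
      by (simp add: Emat_comp)
    also have "\<dots> = (\<Sum>i\<in>UNIV. if i = r then X $ r $ c else 0)"
      by (rule sum.cong[OF refl]) auto
    also have "\<dots> = X $ r $ c" by simp
    finally show ?thesis .
  qed
  thus ?thesis by (simp add: vec_eq_iff)
qed

theorem lemma3p7:
  fixes act :: "'u::unital_cstar_algebra \<Rightarrow> 'a::unital_cstar_algebra \<Rightarrow> 'a"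
  assumes "unital_AC_module act"
  shows "bij_betw (hat :: ('a \<Rightarrow> 'u^'n::finite^'n) \<Rightarrow> _) (CP_A_Mn act) (CP_MnA_U act)
    \<and> (\<forall>\<phi> :: 'a \<Rightarrow> 'u^'n^'n. module_map scC act mscC mlmult \<phi> \<longrightarrow>
          (completely_positive (*) adj (**) madj \<phi> \<longleftrightarrow>
           completely_positive (**) madj (*) adj (hat \<phi>)))"
proof -
  have act_add: "act \<alpha> (a + b) = act \<alpha> a + act \<alpha> b" for \<alpha> a b
    using assms unfolding unital_AC_module_def by blast
  have act0: "act \<alpha> 0 = 0" for \<alpha>
    using additive_zero[of "act \<alpha>"] act_add by blast
  have equiv: "completely_positive (*) adj (**) madj \<phi> \<longleftrightarrow> completely_positive (**) madj (*) adj (hat \<phi>)"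
    if "module_map scC act mscC mlmult \<phi>" for \<phi> :: "'a \<Rightarrow> 'u^'n^'n"
  proof -
    have add: "\<forall>x y. \<phi> (x + y) = \<phi> x + \<phi> y" using that unfolding module_map_def by blast
    show ?thesis using partA[OF add] partB by blast
  qed
  have inj: "inj_on (hat :: ('a \<Rightarrow> 'u^'n^'n) \<Rightarrow> _) (CP_A_Mn act)"
  proof (rule inj_onI)
    fix \<phi> \<psi> :: "'a \<Rightarrow> 'u^'n^'n"
    assume "\<phi> \<in> CP_A_Mn act" "\<psi> \<in> CP_A_Mn act" and h: "hat \<phi> = hat \<psi>"
    hence "\<phi> 0 = 0" "\<psi> 0 = 0" unfolding CP_A_Mn_def module_map_def
      by (auto intro: additive_zero)
    hence "\<phi> a $ i $ j = \<psi> a $ i $ j" for a i j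
      using hat_Emat[of \<phi> i j a] hat_Emat[of \<psi> i j a] h by simp
    thus "\<phi> = \<psi>" by (simp add: vec_eq_iff fun_eq_iff)
  qed
  have img1: "hat \<phi> \<in> CP_MnA_U act" if "\<phi> \<in> CP_A_Mn act" for \<phi> :: "'a \<Rightarrow> 'u^'n^'n"
  proof -
    have mm: "module_map scC act mscC mlmult \<phi>" and cp: "completely_positive (*) adj (**) madj \<phi>"
      using that unfolding CP_A_Mn_def by auto
    have add: "\<phi> (x + y) = \<phi> x + \<phi> y" for x y using mm unfolding module_map_def by blast
    have sc: "\<phi> (scC c x) = mscC c (\<phi> x)" for c x using mm unfolding module_map_def by blast
    have ac: "\<phi> (act \<alpha> x) = mlmult \<alpha> (\<phi> x)" for \<alpha> x using mm unfolding module_map_def by blast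
    have "module_map mscC (mact act) scC (*) (hat \<phi>)"
      unfolding module_map_def
    proof (intro conjI allI)
      fix X Y :: "'a^'n^'n"
      show "hat \<phi> (X + Y) = hat \<phi> X + hat \<phi> Y"
        unfolding hat_def by (simp add: add sum.distrib)
    next
      fix c and X :: "'a^'n^'n"
      show "hat \<phi> (mscC c X) = scC c (hat \<phi> X)"
        unfolding hat_def by (simp add: mscC_def sc scC_sum)
    next
      fix \<alpha> and X :: "'a^'n^'n"
      show "hat \<phi> (mact act \<alpha> X) = \<alpha> * hat \<phi> X"
        unfolding hat_def by (simp add: mact_def ac mlmult_def sum_distrib_left)
    qed
    moreover have "completely_positive (**) madj (*) adj (hat \<phi>)" using partB[OF cp] .
    ultimately show ?thesis unfolding CP_MnA_U_def by blast
  qed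
  have img2: "\<psi> \<in> hat ` CP_A_Mn act" if "\<psi> \<in> CP_MnA_U act" for \<psi> :: "'a^'n^'n \<Rightarrow> 'u"
  proof -
    have mm: "module_map mscC (mact act) scC (*) \<psi>" and cp: "completely_positive (**) madj (*) adj \<psi>"
      using that unfolding CP_MnA_U_def by auto
    have add: "\<forall>x y. \<psi> (x + y) = \<psi> x + \<psi> y" using mm unfolding module_map_def by blast
    have sc: "\<psi> (mscC c x) = scC c (\<psi> x)" for c x using mm unfolding module_map_def by blast
    have ac: "\<psi> (mact act \<alpha> x) = \<alpha> * \<psi> x" for \<alpha> x using mm unfolding module_map_def by blast
    define \<phi> :: "'a \<Rightarrow> 'u^'n^'n" where "\<phi> a = (\<chi> i j. \<psi> (Emat i j a))" for a
    have hp: "hat \<phi> = \<psi>"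
    proof
      fix X :: "'a^'n^'n"
      have "hat \<phi> X = (\<Sum>i\<in>UNIV. \<Sum>j\<in>UNIV. \<psi> (Emat i j (X $ i $ j)))"
        unfolding hat_def \<phi>_def by simp
      also have "\<dots> = \<psi> (\<Sum>i\<in>UNIV. \<Sum>j\<in>UNIV. Emat i j (X $ i $ j))"
        by (simp add: additive_sum[OF add])
      also have "\<dots> = \<psi> X" by (simp add: sum_Emat_self)
      finally show "hat \<phi> X = \<psi> X" .
    qed
    have madd: "\<phi> (x + y) = \<phi> x + \<phi> y" for x y
      unfolding \<phi>_def by (simp add: vec_eq_iff Emat_add add)
    have msc: "\<phi> (scC c x) = mscC c (\<phi> x)" for c x
    proof -
      have E: "Emat i j (scC c x) = mscC c (Emat i j x)" for i j
        by (simp add: vec_eq_iff Emat_comp mscC_def)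
      show ?thesis unfolding \<phi>_def E by (simp only: sc) (simp add: vec_eq_iff mscC_def)
    qed
    have mac: "\<phi> (act \<alpha> x) = mlmult \<alpha> (\<phi> x)" for \<alpha> x
    proof -
      have E: "Emat i j (act \<alpha> x) = mact act \<alpha> (Emat i j x)" for i j
        by (simp add: vec_eq_iff Emat_comp mact_def act0)
      show ?thesis unfolding \<phi>_def E by (simp add: vec_eq_iff mlmult_def ac)
    qed
    have "module_map scC act mscC mlmult \<phi>"
      unfolding module_map_def using madd msc mac by blast
    moreover have "completely_positive (*) adj (**) madj \<phi>"
      using equiv[OF calculation] cp hp by simp
    ultimately have "\<phi> \<in> CP_A_Mn act" unfolding CP_A_Mn_def by blast
    thus ?thesis using hp by blast
  qed
  have "bij_betw (hat :: ('a \<Rightarrow> 'u^'n^'n) \<Rightarrow> _) (CP_A_Mn act) (CP_MnA_U act)"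
    unfolding bij_betw_def using inj img1 img2 by blast
  thus ?thesis using equiv by blast
qed

end
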